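(* Let $V$ be a countable set and $(N_t(i),t\ge0)_{i\in V}$ be i.i.d. continuous-time birth and death processes with individual birth rate $r$ and individual death rate $q<r$, each started from $N_0(i)=1$. Then there exist $\delta>0$ and a nonnegative nonincreasing function $G$ on $\mathbb R_+$ with $G(y)\to0$ as $y\to\infty$ such that for all finite subsets $J\subset I\subset V$ (with $J\ne\emptyset$) and all $x\ge0$, $$\mathbb P\Big(\sup_{t\ge0}\mathbf 1_{\{\sum_{i\in I}N_t(i)>0\}}\frac{\sum_{i\in J}N_t(i)}{\sum_{i\in I}N_t(i)}\ge x\Big)\le G\Big(\frac{\#I}{\#J}x\Big)+e^{-2\delta\#I}.$$ *)

theory Defs
  imports "HOL-Probability.Probability"
begin

definition bd_rate :: "real \<Rightarrow> real \<Rightarrow> nat \<Rightarrow> nat \<Rightarrow> real" where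
  "bd_rate r q n m =
     (if m = Suc n then r * real n
      else if Suc m = n then q * real n
      else if m = n then - (r + q) * real n
      else 0)"

text \<open>Since the linear
  birth and death process is non-explosive, such a p is unique (it is the minimal
  solution, which is honest), i.e. it is the transition function of the process.\<close>
definition is_bd_transition :: "real \<Rightarrow> real \<Rightarrow> (real \<Rightarrow> nat \<Rightarrow> nat \<Rightarrow> real) \<Rightarrow> bool" where
  "is_bd_transition r q p \<longleftrightarrow>
     (\<forall>t\<ge>0. \<forall>n m. p t n m \<ge> 0) \<and>
     (\<forall>t\<ge>0. \<forall>n. summable (p t n) \<and> suminf (p t n) \<le> 1) \<and>
     (\<forall>n m. p 0 n m = (if n = m then 1 else 0)) \<and>
     (\<forall>t\<ge>0. \<forall>n m. ((\<lambda>s. p s n m) has_real_derivative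
                        (\<Sum>k\<le>Suc n. bd_rate r q n k * p t k m)) (at t within {0..}))"

definition iid_bd_family ::
  "'w measure \<Rightarrow> 'v set \<Rightarrow> ('v \<Rightarrow> real \<Rightarrow> 'w \<Rightarrow> nat) \<Rightarrow> (real \<Rightarrow> nat \<Rightarrow> nat \<Rightarrow> real) \<Rightarrow> bool" where
  "iid_bd_family M V N p \<longleftrightarrow>
     (\<forall>F ts k m. finite F \<longrightarrow> F \<subseteq> V \<longrightarrow> ts 0 = 0 \<longrightarrow> (\<forall>j<k. ts j < ts (Suc j)) \<longrightarrow>
        measure M {\<omega>\<in>space M. \<forall>i\<in>F. \<forall>j\<le>k. N i (ts j) \<omega> = m i j}
        = (\<Prod>i\<in>F. (if m i 0 = 1 then 1 else 0) *
                    (\<Prod>j<k. p (ts (Suc j) - ts j) (m i j) (m i (Suc j)))))"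

definition bd_ratio :: "('v \<Rightarrow> real \<Rightarrow> 'w \<Rightarrow> nat) \<Rightarrow> 'v set \<Rightarrow> 'v set \<Rightarrow> real \<Rightarrow> 'w \<Rightarrow> real" where
  "bd_ratio N I J t \<omega> =
     (if (\<Sum>i\<in>I. N i t \<omega>) > 0
      then real (\<Sum>i\<in>J. N i t \<omega>) / real (\<Sum>i\<in>I. N i t \<omega>) else 0)"

end

theory Submission
  imports Defs
begin


lemma bd_rate_sum:
  "(\<Sum>k\<le>Suc n. bd_rate r q n k * f k) =
     real n * (r * f (Suc n) - (r+q) * f n + q * f (n-1))"
proof (cases n)
  case 0
  then show ?thesis by (simp add: bd_rate_def)
next
  case (Suc m)
  have z: "(\<Sum>k<m. bd_rate r q n k * f k) = 0"
    by (rule sum.neutral) (auto simp: bd_rate_def Suc)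
  have "(\<Sum>k\<le>Suc n. bd_rate r q n k * f k) =
     (\<Sum>k<m. bd_rate r q n k * f k) + bd_rate r q n m * f m + bd_rate r q n (Suc m) * f (Suc m)
      + bd_rate r q n (Suc (Suc m)) * f (Suc (Suc m))"
    by (simp add: Suc lessThan_Suc_atMost[symmetric])
  also have "\<dots> = real n * (r * f (Suc n) - (r+q) * f n + q * f (n-1))"
    using z by (simp add: bd_rate_def Suc algebra_simps)
  finally show ?thesis .
qed

lemma deriv_nonpos_decr:
  fixes f f' :: "real \<Rightarrow> real"
  assumes "\<And>x. x \<ge> 0 \<Longrightarrow> (f has_real_derivative f' x) (at x within {0..})"
    and "\<And>x. x \<ge> 0 \<Longrightarrow> f' x \<le> 0" and "0 \<le> t"
  shows "f t \<le> f 0"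
proof -
  have "\<exists>x\<in>{0..t}. f t - f 0 = (\<lambda>h. f' x * h) (t - 0)"
  proof (rule mvt_very_simple)
    fix x assume "0 \<le> x" "x \<le> t"
    then show "(f has_derivative (\<lambda>h. f' x * h)) (at x within {0..t})"
      using assms(1)[of x] unfolding has_field_derivative_def
      by (meson atLeastAtMost_iff atLeast_iff has_derivative_subset subsetI)
  qed (use assms in auto)
  then obtain x where "x \<in> {0..t}" "f t - f 0 = f' x * t" by auto
  moreover have "f' x \<le> 0" using assms(2) \<open>x \<in> {0..t}\<close> by auto
  ultimately show ?thesis using \<open>0 \<le> t\<close> mult_nonpos_nonneg[of "f' x" t] by linarith
qed

locale bdp =
  fixes r q :: real and p :: "real \<Rightarrow> nat \<Rightarrow> nat \<Rightarrow> real"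
  assumes q0: "0 \<le> q" and qr: "q < r" and bd: "is_bd_transition r q p"
begin

lemma nonneg: "t \<ge> 0 \<Longrightarrow> 0 \<le> p t n m"
  using bd unfolding is_bd_transition_def by auto

lemma summ: "t \<ge> 0 \<Longrightarrow> summable (p t n)"
  using bd unfolding is_bd_transition_def by auto

lemma suminf_le1: "t \<ge> 0 \<Longrightarrow> suminf (p t n) \<le> 1"
  using bd unfolding is_bd_transition_def by auto

lemma init: "p 0 n m = (if n = m then 1 else 0)"
  using bd unfolding is_bd_transition_def by auto

lemma le1: assumes "t \<ge> 0" shows "p t n m \<le> 1"
proof -
  have "p t n m = sum (p t n) {m}" by simp
  also have "\<dots> \<le> suminf (p t n)"
    by (rule sum_le_suminf) (use summ nonneg assms in auto)
  finally show ?thesis using suminf_le1[OF assms, of n] by linarith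
qed

lemma deriv: "t \<ge> 0 \<Longrightarrow> ((\<lambda>s. p s n m) has_real_derivative
   real n * (r * p t (Suc n) m - (r+q) * p t n m + q * p t (n-1) m)) (at t within {0..})"
proof -
  assume t: "t \<ge> 0"
  have "((\<lambda>s. p s n m) has_real_derivative (\<Sum>k\<le>Suc n. bd_rate r q n k * p t k m)) (at t within {0..})"
    using bd t unfolding is_bd_transition_def by blast
  then show ?thesis unfolding bd_rate_sum[where f="\<lambda>k. p t k m"] .
qed

lemma p_zero: assumes "t \<ge> 0" shows "p t 0 m = (if m = 0 then 1 else 0)"
proof -
  have "\<exists>c. \<forall>x\<in>{0::real..}. p x 0 m = c"
    by (rule has_field_derivative_zero_constant) (use deriv[of _ 0 m] in auto)
  then obtain c where "\<forall>x\<in>{0::real..}. p x 0 m = c" by blast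
  then have "p t 0 m = p 0 0 m" using assms by auto
  then show ?thesis by (simp add: init)
qed

end


context bdp begin

definition H :: "real \<Rightarrow> nat \<Rightarrow> real \<Rightarrow> real" where
  "H t n z = (\<Sum>m. p t n m * z ^ m)"

lemma H_summable: assumes "t \<ge> 0" "0 \<le> z" "z \<le> 1"
  shows "summable (\<lambda>m. p t n m * z ^ m)"
proof (rule summable_comparison_test'[OF summ[OF assms(1), of n]])
  fix m show "norm (p t n m * z ^ m) \<le> p t n m"
    using nonneg[OF assms(1)] assms by (simp add: abs_mult mult_left_le power_le_one)
qed

lemma H_sums: "t \<ge> 0 \<Longrightarrow> 0 \<le> z \<Longrightarrow> z \<le> 1 \<Longrightarrow> (\<lambda>m. p t n m * z ^ m) sums H t n z"
  unfolding H_def by (rule summable_sums[OF H_summable])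

lemma H_bounds: assumes "t \<ge> 0" "0 \<le> z" "z \<le> 1"
  shows "0 \<le> H t n z" "H t n z \<le> 1"
proof -
  show "0 \<le> H t n z" unfolding H_def
    by (rule suminf_nonneg[OF H_summable[OF assms]]) (use nonneg[OF assms(1)] assms in auto)
  have "H t n z \<le> suminf (p t n)" unfolding H_def
    by (rule suminf_le[OF _ H_summable[OF assms] summ[OF assms(1)]])
       (use nonneg[OF assms(1)] assms in \<open>auto simp: mult_left_le power_le_one\<close>)
  then show "H t n z \<le> 1" using suminf_le1[OF assms(1), of n] by linarith
qed

lemma H_zero: assumes "t \<ge> 0" shows "H t 0 z = 1"
proof -
  have "(\<lambda>m. p t 0 m * z ^ m) = (\<lambda>m. if m = 0 then 1 else 0)"
    using p_zero[OF assms] by auto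
  then show ?thesis unfolding H_def using sums_single[of 0 "\<lambda>_. 1::real"] sums_unique by fastforce
qed

lemma H_init: "H 0 n z = z ^ n"
proof -
  have "(\<lambda>m. p 0 n m * z ^ m) = (\<lambda>m. if m = n then z ^ m else 0)"
    using init by auto
  then show ?thesis unfolding H_def using sums_single[of n "\<lambda>m. z ^ m"] sums_unique by fastforce
qed

lemma H_deriv: assumes t: "t \<ge> 0" and z: "0 \<le> z" "z < 1"
  shows "((\<lambda>s. H s n z) has_real_derivative
     real n * (r * H t (Suc n) z - (r+q) * H t n z + q * H t (n-1) z)) (at t within {0..})"
proof -
  define f where "f m s = p s n m * z ^ m" for m s
  define f' where "f' m s = real n * (r * p s (Suc n) m - (r+q) * p s n m + q * p s (n-1) m) * z ^ m" for m s
  have unif: "uniform_limit {0..} (\<lambda>N x. \<Sum>i<N. f' i x) (\<lambda>x. \<Sum>i. f' i x) sequentially"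
  proof (rule Weierstrass_m_test)
    fix m and x :: real assume "x \<in> {0..}"
    then have x: "x \<ge> 0" by simp
    have "\<bar>r * p x (Suc n) m - (r+q) * p x n m + q * p x (n-1) m\<bar> \<le> r + (r+q) + q"
    proof -
      have "\<bar>r * p x (Suc n) m\<bar> \<le> r" using nonneg[OF x] le1[OF x] qr q0
        by (simp add: abs_mult mult_left_le)
      moreover have "\<bar>(r+q) * p x n m\<bar> \<le> r+q" using nonneg[OF x] le1[OF x] qr q0
        by (simp add: abs_mult mult_left_le)
      moreover have "\<bar>q * p x (n-1) m\<bar> \<le> q" using nonneg[OF x] le1[OF x] qr q0
        by (simp add: abs_mult mult_left_le)
      ultimately show ?thesis by linarith
    qed
    then show "norm (f' m x) \<le> real n * (r + (r+q) + q) * z ^ m"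
      unfolding f'_def using z by (simp add: abs_mult mult_right_mono mult_left_mono)
  next
    show "summable (\<lambda>m. real n * (r + (r+q) + q) * z ^ m)"
      using z by (intro summable_mult summable_geometric) auto
  qed
  have "\<exists>g. \<forall>x\<in>{0..}. (\<lambda>m. f m x) sums g x \<and> (g has_field_derivative (\<Sum>i. f' i x)) (at x within {0..})"
  proof (rule has_field_derivative_series[OF _ _ unif])
    fix m and x :: real assume "x \<in> {0..}"
    then show "(f m has_field_derivative f' m x) (at x within {0..})"
      unfolding f_def f'_def by (auto intro!: derivative_eq_intros deriv)
  next
    show "summable (\<lambda>m. f m 0)" unfolding f_def using H_summable[of 0 z] z by auto
  qed auto
  then obtain g where g: "\<And>x. x \<ge> 0 \<Longrightarrow> (\<lambda>m. f m x) sums g x \<and> (g has_field_derivative (\<Sum>i. f' i x)) (at x within {0..})"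
    by auto
  have gH: "g x = H x n z" if "x \<ge> 0" for x
    using g[OF that] H_sums[OF that z(1)] z unfolding f_def by (auto dest: sums_unique2)
  have "(\<lambda>i. f' i t) sums (real n * (r * H t (Suc n) z - (r+q) * H t n z + q * H t (n-1) z))"
  proof -
    have "(\<lambda>i. real n * (r * (p t (Suc n) i * z^i) - (r+q) * (p t n i * z^i) + q * (p t (n-1) i * z^i)))
       sums (real n * (r * H t (Suc n) z - (r+q) * H t n z + q * H t (n-1) z))"
      using H_sums[OF t z(1)] z
      by (intro sums_mult sums_add sums_diff) auto
    then show ?thesis unfolding f'_def by (simp add: algebra_simps)
  qed
  then have "(\<Sum>i. f' i t) = real n * (r * H t (Suc n) z - (r+q) * H t n z + q * H t (n-1) z)"
    by (rule sums_unique[symmetric])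
  with g[OF t] have "(g has_real_derivative real n * (r * H t (Suc n) z - (r+q) * H t n z + q * H t (n-1) z)) (at t within {0..})"
    by simp
  then show ?thesis
    by (rule has_field_derivative_transform_within[where d=1]) (use t gH in auto)
qed

end



lemma telescope_ineq:
  fixes c d q r x y zz :: real
  assumes "0 < c" "c \<le> d" "0 \<le> q" "0 \<le> r"
  shows "2*c*y*(r*zz - (r+q)*y + q*x) \<le> - r*c*y^2 + r*c*zz^2 + q*d*x^2 - q*c*y^2"
proof -
  have "0 \<le> r*c*(zz-y)^2" using assms by simp
  moreover have "0 \<le> q*c*(x-y)^2" using assms by simp
  moreover have "0 \<le> q*(d-c)*x^2" using assms by simp
  moreover have "r*c*(zz-y)^2 + q*c*(x-y)^2 + q*(d-c)*x^2 = (- r*c*y^2 + r*c*zz^2 + q*d*x^2 - q*c*y^2) - 2*c*y*(r*zz - (r+q)*y + q*x)"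
    by (simp add: power2_eq_square algebra_simps)
  ultimately show ?thesis by linarith
qed

lemma sq_bound: "\<bar>x::real\<bar> \<le> B \<Longrightarrow> x^2 \<le> B^2"
proof -
  assume a: "\<bar>x\<bar> \<le> B"
  have "\<bar>x\<bar>^2 \<le> B^2" by (rule power_mono[OF a abs_ge_zero])
  then show ?thesis by simp
qed

lemma e1: fixes k y zz x r q :: real assumes "k > 0"
  shows "1 / (k * (k + 1)) * (2 * y * (k * (r * zz - (r+q) * y + q * x)))
       = 2 * (1/(k+1)) * y * (r * zz - (r+q) * y + q * x)"
proof -
  have "k + k*k > 0" "k + 1 > 0" "k*(k+1) > 0" using assms by (auto simp: add_pos_pos)
  then show ?thesis using assms by (simp add: field_simps)
qed

lemma e2: fixes k y zz x r q :: real assumes "k > 0"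
  shows "r * (1 / (k * (k + 1)) * y^2) + r * (zz^2 / (k+1) - y^2 / k) + q * (x^2 / k - y^2 / (k + 1))
   = - r*(1/(k+1))*y^2 + r*(1/(k+1))*zz^2 + q*(1/k)*x^2 - q*(1/(k+1))*y^2"
proof -
  have h1: "1/(k*(k+1)) = 1/k - 1/(k+1)" using assms by (simp add: field_simps)
  have g: "r*((b - a)*y^2) + r*(zz^2*a - y^2*b) + q*(x^2*b - y^2*a) = - r*a*y^2 + r*a*zz^2 + q*b*x^2 - q*a*y^2"
    for a b :: real by (simp add: algebra_simps)
  show ?thesis using g[of "1/k" "1/(k+1)"] unfolding h1 by (simp add: divide_inverse)
qed



lemma bd_unique:
  fixes D :: "real \<Rightarrow> nat \<Rightarrow> real" and r q B :: real
  assumes q0: "0 \<le> q" and qr: "q < r"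
    and bnd: "\<And>t n. t \<ge> 0 \<Longrightarrow> \<bar>D t n\<bar> \<le> B"
    and init: "\<And>n. D 0 n = 0"
    and zero: "\<And>t. t \<ge> 0 \<Longrightarrow> D t 0 = 0"
    and der: "\<And>t n. t\<ge>0 \<Longrightarrow> ((\<lambda>s. D s n) has_real_derivative
          real n * (r * D t (Suc n) - (r+q) * D t n + q * D t (n-1))) (at t within {0..})"
    and t: "t \<ge> 0"
  shows "D t n = 0"
proof -
  have r0: "0 \<le> r" using q0 qr by linarith
  define w where "w j = 1 / (real j * (real j + 1))" for j :: nat
  define Phi where "Phi N s = (\<Sum>j=1..N. w j * (D s j)^2)" for N s
  define L where "L s j = real j * (r * D s (Suc j) - (r+q) * D s j + q * D s (j-1))" for s j
  have B2: "(D s j)^2 \<le> B^2" if "s \<ge> 0" for s j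
    using bnd[OF that, of j] by (rule sq_bound)
  have key: "(\<Sum>j=1..N. w j * (2 * D s j * L s j)) \<le> r * Phi N s + r * ((D s (Suc N))^2 / real (Suc N))"
    if s: "s \<ge> 0" for N s
  proof -
    define T where "T j = (D s j)^2 / real j" for j
    define U where "U j = (D s j)^2 / (real j + 1)" for j
    have hterm: "w j * (2 * D s j * L s j) \<le> r * (w j * (D s j)^2) + r * (T (Suc j) - T j) + q * (U (j-1) - U j)"
      if j: "j \<ge> 1" for j
    proof -
      have jpos: "real j > 0" using j by simp
      have jm: "real (j-1) + 1 = real j" using j by (simp add: of_nat_diff)
      have "w j * (2 * D s j * L s j) = 2 * (1/(real j+1)) * D s j * (r * D s (Suc j) - (r+q) * D s j + q * D s (j-1))"
        using e1[OF jpos, of "D s j" r "D s (Suc j)" q "D s (j-1)"] unfolding w_def L_def by (simp add: mult.assoc)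
      also have "\<dots> \<le> - r*(1/(real j+1))*(D s j)^2 + r*(1/(real j+1))*(D s (Suc j))^2 + q*(1/real j)*(D s (j-1))^2 - q*(1/(real j+1))*(D s j)^2"
        by (rule telescope_ineq) (use jpos q0 r0 in \<open>auto simp: frac_le\<close>)
      also have "\<dots> = r * (w j * (D s j)^2) + r * (T (Suc j) - T j) + q * (U (j-1) - U j)"
        using e2[OF jpos, of r "D s j" "D s (Suc j)" q "D s (j-1)"] unfolding w_def T_def U_def jm
        by (simp add: add_ac)
      finally show ?thesis .
    qed
    have "(\<Sum>j=1..N. w j * (2 * D s j * L s j)) \<le> (\<Sum>j=1..N. r * (w j * (D s j)^2) + r * (T (Suc j) - T j) + q * (U (j-1) - U j))"
      by (rule sum_mono) (use hterm in auto)
    also have "\<dots> = r * Phi N s + r * (\<Sum>j=1..N. T (Suc j) - T j) + q * (\<Sum>j=1..N. U (j-1) - U j)"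
      unfolding Phi_def by (simp add: sum.distrib sum_distrib_left)
    also have "(\<Sum>j=1..N. T (Suc j) - T j) = T (Suc N) - T 1"
      by (rule sum_Suc_diff) simp
    also have "(\<Sum>j=1..N. U (j-1) - U j) = U 0 - U N"
    proof (induction N)
      case 0 then show ?case by simp
    next
      case (Suc N) then show ?case by (cases N) auto
    qed
    also have "U 0 = 0" unfolding U_def using zero[OF s] by simp
    finally have *: "(\<Sum>j=1..N. w j * (2 * D s j * L s j)) \<le> r * Phi N s + r * (T (Suc N) - T 1) + q * (0 - U N)" .
    have "T 1 \<ge> 0" "U N \<ge> 0" unfolding T_def U_def by simp_all
    then have "r * (T (Suc N) - T 1) \<le> r * T (Suc N)" "q * (0 - U N) \<le> 0"
      using r0 q0 by (simp_all add: mult_left_mono mult_nonneg_nonneg)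
    with * show ?thesis unfolding T_def by linarith
  qed
  have PhiN: "exp (- (r * t)) * Phi N t \<le> B^2 / real (Suc N)" for N
  proof -
    define Psi where "Psi s = exp (- (r * s)) * Phi N s + B^2 / real (Suc N) * exp (- (r * s))" for s
    have dPhi: "((\<lambda>s. Phi N s) has_real_derivative (\<Sum>j=1..N. w j * (2 * D s j * L s j))) (at s within {0..})"
      if "s \<ge> 0" for s
      unfolding Phi_def L_def
      by (rule derivative_eq_intros der[OF that] refl)+ (simp add: power2_eq_square algebra_simps)
    have "Psi t \<le> Psi 0"
    proof (rule deriv_nonpos_decr[OF _ _ t])
      fix s :: real assume s: "s \<ge> 0"
      show "(Psi has_real_derivative
          exp (- (r * s)) * ((\<Sum>j=1..N. w j * (2 * D s j * L s j)) - r * Phi N s - r * (B^2 / real (Suc N)))) (at s within {0..})"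
        unfolding Psi_def
        by (rule derivative_eq_intros dPhi[OF s] refl)+ (simp add: algebra_simps)
      have "r * ((D s (Suc N))^2 / real (Suc N)) \<le> r * (B^2 / real (Suc N))"
        using B2[OF s] r0 by (intro mult_left_mono divide_right_mono) auto
      then have "(\<Sum>j=1..N. w j * (2 * D s j * L s j)) - r * Phi N s - r * (B^2 / real (Suc N)) \<le> 0"
        using key[OF s, of N] by linarith
      then show "exp (- (r * s)) * ((\<Sum>j=1..N. w j * (2 * D s j * L s j)) - r * Phi N s - r * (B^2 / real (Suc N))) \<le> 0"
        by (simp add: mult_nonneg_nonpos)
    qed
    moreover have "Psi 0 = B^2 / real (Suc N)" unfolding Psi_def Phi_def using init by simp
    moreover have "0 \<le> B^2 / real (Suc N) * exp (- (r * t))" by simp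
    ultimately show ?thesis unfolding Psi_def by linarith
  qed
  show ?thesis
  proof (cases n)
    case 0 then show ?thesis using zero[OF t] by simp
  next
    case (Suc n')
    have wpos: "w n > 0" unfolding w_def using Suc by simp
    have "(D t n)^2 \<le> 0"
    proof (rule field_le_epsilon)
      fix e :: real assume e: "e > 0"
      have ep: "e * w n * exp (- (r * t)) > 0" using e wpos by simp
      have "((\<lambda>N. B^2 / real (Suc N)) \<longlongrightarrow> 0) sequentially"
        using LIMSEQ_Suc[OF lim_const_over_n[of "B^2"]] by simp
      then have "eventually (\<lambda>N. B^2 / real (Suc N) < e * w n * exp (- (r * t))) sequentially"
        using ep by (rule order_tendstoD)
      then obtain N0 where N0: "\<And>N. N \<ge> N0 \<Longrightarrow> B^2 / real (Suc N) < e * w n * exp (- (r * t))"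
        unfolding eventually_sequentially by auto
      define N where "N = max N0 n"
      have N: "N \<ge> n" "B^2 / real (Suc N) \<le> e * w n * exp (- (r * t))"
        using N0[of N] unfolding N_def by auto
      have "w n * (D t n)^2 \<le> Phi N t"
      proof -
        have "w n * (D t n)^2 = (\<Sum>j\<in>{n}. w j * (D t j)^2)" by simp
        also have "\<dots> \<le> Phi N t" unfolding Phi_def
          by (rule sum_mono2) (use N Suc in \<open>auto simp: w_def\<close>)
        finally show ?thesis .
      qed
      then have "exp (- (r * t)) * (w n * (D t n)^2) \<le> exp (- (r * t)) * Phi N t"
        by (simp add: mult_left_mono)
      also have "\<dots> \<le> e * w n * exp (- (r * t))" using PhiN[of N] N(2) by linarith
      finally have "exp (- (r * t)) * (w n * (D t n)^2) \<le> exp (- (r * t)) * (e * w n)" by (simp add: mult_ac)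
      then have "w n * (D t n)^2 \<le> e * w n" by simp
      then have "w n * (D t n)^2 \<le> w n * e" by (simp add: mult.commute)
      then show "(D t n)^2 \<le> 0 + e" using wpos by simp
    qed
    then show ?thesis by simp
  qed
qed


context bdp begin

definition phi :: "real \<Rightarrow> real \<Rightarrow> real" where
  "phi t z = 1 - (r-q)*(1-z)*exp((r-q)*t) / ((r-q) + r*(1-z)*(exp((r-q)*t) - 1))"

lemma phi_facts:
  assumes t: "t \<ge> 0" and z: "0 \<le> z" "z \<le> 1"
  shows "(r-q) + r*(1-z)*(exp((r-q)*t) - 1) > 0" "0 \<le> phi t z" "phi t z \<le> 1"
proof -
  define a where "a = r - q"
  define w where "w = 1 - z"
  define E where "E = exp (a*t)"
  have a: "a > 0" using qr unfolding a_def by simp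
  have w: "0 \<le> w" "w \<le> 1" using z unfolding w_def by auto
  have E: "E \<ge> 1" unfolding E_def using a t by simp
  have r0: "r > 0" using q0 qr by linarith
  have "r*w*(E-1) \<ge> 0" using r0 w E by simp
  then have Dn: "a + r*w*(E-1) > 0" using a by linarith
  then show "(r-q) + r*(1-z)*(exp((r-q)*t) - 1) > 0" unfolding a_def w_def E_def .
  have num: "a*w*E \<ge> 0" using a w E by simp
  have "q*w*1 \<le> q*w*E" using q0 w E by (intro mult_left_mono) auto
  then have "a - r*w + q*w*E \<ge> a - r*w + q*w" by simp
  also have "a - r*w + q*w = a*(1-w)" unfolding a_def by (simp add: algebra_simps)
  also have "\<dots> \<ge> 0" using a w by simp
  finally have "a*w*E \<le> a + r*w*(E-1)" unfolding a_def by (simp add: algebra_simps)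
  then have le: "a*w*E / (a + r*w*(E-1)) \<le> 1" using Dn by simp
  have ge: "a*w*E / (a + r*w*(E-1)) \<ge> 0" using Dn num by simp
  show "0 \<le> phi t z" "phi t z \<le> 1" using le ge unfolding phi_def a_def w_def E_def by simp_all
qed

lemma phi_init: "phi 0 z = z"
  using qr by (simp add: phi_def)

lemma phi_deriv:
  assumes t: "t \<ge> 0" and z: "0 \<le> z" "z \<le> 1"
  shows "((\<lambda>s. phi s z) has_real_derivative (r * (phi t z)^2 - (r+q) * phi t z + q)) (at t within {0..})"
proof -
  define a where "a = r - q"
  define w where "w = 1 - z"
  define Dn where "Dn x = a + r*w*(exp(a*x) - 1)" for x
  have Dn: "Dn t > 0" using phi_facts(1)[OF t z] unfolding Dn_def a_def w_def .
  have ph: "phi x z = 1 - a*w*exp(a*x) / Dn x" for x unfolding phi_def Dn_def a_def w_def ..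
  define psi where "psi = a*w*exp(a*t) / Dn t"
  have d: "((\<lambda>x. 1 - a*w*exp(a*x) / Dn x) has_real_derivative
      - ((a*w*(exp(a*t)*a) * Dn t - a*w*exp(a*t)*(r*w*(exp(a*t)*a))) / (Dn t * Dn t))) (at t)"
    unfolding Dn_def using Dn unfolding Dn_def
    by (intro derivative_eq_intros refl) auto
  have "- ((a*w*(exp(a*t)*a) * Dn t - a*w*exp(a*t)*(r*w*(exp(a*t)*a))) / (Dn t * Dn t))
      = - (a * psi - r * psi^2)"
  proof -
    have "Dn t - r*w*exp(a*t) = a - r*w" unfolding Dn_def by (simp add: algebra_simps)
    then show ?thesis unfolding psi_def using Dn
      by (simp add: field_simps power2_eq_square)
  qed
  also have "\<dots> = r * (1 - psi)^2 - (r+q) * (1 - psi) + q"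
    unfolding a_def by (simp add: power2_eq_square algebra_simps)
  also have "1 - psi = phi t z" unfolding psi_def ph ..
  finally have "((\<lambda>s. phi s z) has_real_derivative (r * (phi t z)^2 - (r+q) * phi t z + q)) (at t)"
    using d unfolding ph[abs_def] by simp
  then show ?thesis by (rule has_field_derivative_at_within)
qed

end


lemma powser_unique0:
  fixes d :: "nat \<Rightarrow> real"
  assumes bnd: "\<And>m. \<bar>d m\<bar> \<le> B"
    and z: "\<And>z. 0 < z \<Longrightarrow> z < 1 \<Longrightarrow> (\<Sum>m. d m * z^m) = 0"
  shows "d m = 0"
proof (induction m rule: less_induct)
  case (less m)
  define e where "e j = d (j + m)" for j
  have summ: "summable (\<lambda>j. f j * x^j)" if "\<bar>x\<bar> < 1" "\<And>j. \<bar>f j\<bar> \<le> B" for x :: real and f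
  proof (rule summable_comparison_test'[where g="\<lambda>j. B * \<bar>x\<bar>^j"])
    show "summable (\<lambda>j. B * \<bar>x\<bar>^j)" using that by (intro summable_mult summable_geometric) auto
    fix j show "norm (f j * x^j) \<le> B * \<bar>x\<bar>^j"
      using that(2)[of j] by (simp add: abs_mult power_abs mult_right_mono)
  qed
  have e0: "(\<Sum>j. e j * x^j) = 0" if x: "0 < x" "x < 1" for x
  proof -
    have sd: "summable (\<lambda>j. d j * x^j)" using x bnd by (intro summ) auto
    have "0 = (\<Sum>j. d j * x^j)" using z[OF x] by simp
    also have "\<dots> = (\<Sum>j. d (j + m) * x^(j + m)) + (\<Sum>j<m. d j * x^j)"
      by (rule suminf_split_initial_segment[OF sd])
    also have "(\<Sum>j<m. d j * x^j) = 0" using less by simp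
    also have "(\<Sum>j. d (j + m) * x^(j + m)) = x^m * (\<Sum>j. e j * x^j)"
    proof -
      have se: "summable (\<lambda>j. e j * x^j)" using x bnd unfolding e_def by (intro summ) auto
      have "(\<Sum>j. d (j + m) * x^(j + m)) = (\<Sum>j. x^m * (e j * x^j))"
        unfolding e_def by (simp add: power_add mult_ac)
      also have "\<dots> = x^m * (\<Sum>j. e j * x^j)" by (rule suminf_mult[OF se])
      finally show ?thesis .
    qed
    finally show ?thesis using x by simp
  qed
  define f where "f x = (\<Sum>j. e j * x^j)" for x :: real
  have "(f \<longlongrightarrow> e 0) (at 0)"
  proof (rule powser_limit_0[where s=1])
    fix x :: real assume "norm x < 1"
    then show "(\<lambda>j. e j * x^j) sums f x" unfolding f_def
      using bnd unfolding e_def by (intro summable_sums summ) auto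
  qed simp
  then have l1: "(f \<longlongrightarrow> e 0) (at_right 0)" by (rule tendsto_within_subset[OF _ subset_UNIV])
  have "eventually (\<lambda>x. f x = 0) (at_right (0::real))"
    unfolding eventually_at_right[OF zero_less_one] using e0 unfolding f_def by (intro exI[of _ 1]) auto
  then have l2: "(f \<longlongrightarrow> 0) (at_right 0)" by (rule tendsto_eventually)
  have "e 0 = 0" using tendsto_unique[OF _ l1 l2] by simp
  then show ?case unfolding e_def by simp
qed

context bdp begin

lemma H_phi: assumes t: "t \<ge> 0" and z: "0 \<le> z" "z < 1"
  shows "H t n z = phi t z ^ n"
proof -
  define D where "D s k = H s k z - phi s z ^ k" for s k
  have "D t n = 0"
  proof (rule bd_unique[OF q0 qr, where B=2 and D=D])
    fix s k assume s: "(s::real) \<ge> 0"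
    have "0 \<le> phi s z ^ k" "phi s z ^ k \<le> 1"
      using phi_facts[OF s, of z] z by (auto intro: power_le_one)
    then show "\<bar>D s k\<bar> \<le> 2" using H_bounds[OF s, of z k] z unfolding D_def by auto
  next
    fix k show "D 0 k = 0" unfolding D_def H_init phi_init by simp
  next
    fix s :: real assume "s \<ge> 0" then show "D s 0 = 0" unfolding D_def using H_zero by simp
  next
    fix s :: real and k assume s: "s \<ge> 0"
    have dphi: "((\<lambda>x. phi x z ^ k) has_real_derivative
       real k * (r * phi s z ^ Suc k - (r+q) * phi s z ^ k + q * phi s z ^ (k-1))) (at s within {0..})"
    proof -
      have d1: "((\<lambda>x. phi x z ^ k) has_real_derivative
         real k * phi s z ^ (k-1) * (r * (phi s z)^2 - (r+q) * phi s z + q)) (at s within {0..})"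
        using phi_deriv[OF s, of z] z by (auto intro!: derivative_eq_intros)
      have e: "real k * phi s z ^ (k-1) * (r * (phi s z)^2 - (r+q) * phi s z + q)
          = real k * (r * phi s z ^ Suc k - (r+q) * phi s z ^ k + q * phi s z ^ (k-1))"
      proof (cases k)
        case (Suc k') then show ?thesis by (simp add: power2_eq_square algebra_simps)
      qed simp
      show ?thesis using d1 unfolding e .
    qed
    show "((\<lambda>x. D x k) has_real_derivative
          real k * (r * D s (Suc k) - (r+q) * D s k + q * D s (k-1))) (at s within {0..})"
      unfolding D_def
      using DERIV_diff[OF H_deriv[OF s z, of k] dphi]
      by (simp add: algebra_simps)
  qed (use t in auto)
  then show ?thesis unfolding D_def by simp
qed

lemma conv: assumes t: "t \<ge> 0"
  shows "p t (u+v) m = (\<Sum>x\<le>m. p t u x * p t v (m-x))"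
proof -
  define c where "c m = (\<Sum>x\<le>m. p t u x * p t v (m-x))" for m
  define d where "d m = p t (u+v) m - c m" for m
  have c_le: "0 \<le> c k \<and> c k \<le> 1" for k
  proof -
    have "c k \<le> (\<Sum>x\<le>k. p t u x)" unfolding c_def
      by (rule sum_mono) (use nonneg[OF t] le1[OF t] in \<open>auto simp: mult_left_le\<close>)
    also have "\<dots> = sum (p t u) {..<Suc k}" by (simp add: lessThan_Suc_atMost)
    also have "\<dots> \<le> suminf (p t u)" by (rule sum_le_suminf) (use summ[OF t] nonneg[OF t] in auto)
    also have "\<dots> \<le> 1" by (rule suminf_le1[OF t])
    finally show ?thesis unfolding c_def using nonneg[OF t] by (auto intro: sum_nonneg)
  qed
  have "d m = 0"
  proof (rule powser_unique0[where B=2])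
    fix k show "\<bar>d k\<bar> \<le> 2" unfolding d_def using c_le[of k] nonneg[OF t] le1[OF t]
      by (smt (verit) abs_le_iff)
  next
    fix z :: real assume z: "0 < z" "z < 1"
    have sH: "summable (\<lambda>m. norm (p t k m * z^m))" for k
      using H_summable[OF t, of z k] z nonneg[OF t] by (simp add: abs_mult)
    have "(\<lambda>m. \<Sum>i\<le>m. (p t u i * z^i) * (p t v (m-i) * z^(m-i))) sums (H t u z * H t v z)"
      unfolding H_def by (rule Cauchy_product_sums[OF sH sH])
    moreover have "(\<Sum>i\<le>m. (p t u i * z^i) * (p t v (m-i) * z^(m-i))) = c m * z^m" for m
      unfolding c_def sum_distrib_right
      by (rule sum.cong) (auto simp: power_add[symmetric] mult_ac)
    ultimately have cs: "(\<lambda>m. c m * z^m) sums (H t u z * H t v z)" by simp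
    have eq: "H t u z * H t v z = H t (u+v) z" using H_phi[OF t] z by (simp add: power_add)
    have "(\<lambda>m. d m * z^m) sums (H t (u+v) z - H t u z * H t v z)"
      using sums_diff[OF H_sums[OF t, of z "u+v"] cs] z unfolding d_def by (simp add: left_diff_distrib)
    then show "(\<Sum>m. d m * z^m) = 0" using eq by (simp add: sums_iff)
  qed
  then show ?thesis unfolding d_def c_def by simp
qed

end


lemma nn_count_single:
  assumes "a \<in> A"
  shows "(\<integral>\<^sup>+x. indicator {a} x * c \<partial>count_space A) = (c::ennreal)"
proof -
  have "(\<integral>\<^sup>+x. indicator {a} x * c \<partial>count_space A) = (\<integral>\<^sup>+x. c * indicator {a} x \<partial>count_space A)"
    by (simp add: mult.commute)
  also have "\<dots> = c * emeasure (count_space A) {a}"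
    by (rule nn_integral_cmult_indicator) (use assms in auto)
  also have "\<dots> = c" using assms by simp
  finally show ?thesis .
qed

lemma nn_count_restrict:
  assumes "B \<subseteq> A"
  shows "(\<integral>\<^sup>+x. indicator B x * f x \<partial>count_space A) = (\<integral>\<^sup>+x. f x \<partial>count_space B)"
proof -
  have "(\<integral>\<^sup>+x. f x \<partial>count_space B) = (\<integral>\<^sup>+x. f x * indicator B x \<partial>count_space UNIV)"
    by (cases "B = UNIV") (auto simp: nn_integral_count_space_indicator)
  also have "\<dots> = (\<integral>\<^sup>+x. (indicator B x * f x) * indicator A x \<partial>count_space UNIV)"
    by (rule nn_integral_cong) (use assms in \<open>auto split: split_indicator\<close>)
  also have "\<dots> = (\<integral>\<^sup>+x. indicator B x * f x \<partial>count_space A)"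
    by (cases "A = UNIV") (auto simp: nn_integral_count_space_indicator)
  finally show ?thesis ..
qed

lemma nn_count_Sigma:
  fixes f :: "'a \<times> 'b \<Rightarrow> ennreal"
  assumes A: "countable A"
  shows "(\<integral>\<^sup>+z. f z \<partial>count_space (A \<times> B)) = (\<integral>\<^sup>+a. \<integral>\<^sup>+b. f (a, b) \<partial>count_space B \<partial>count_space A)"
proof -
  have "(\<integral>\<^sup>+z. f z \<partial>count_space (A \<times> B)) = (\<integral>\<^sup>+z. \<integral>\<^sup>+a. indicator {a} (fst z) * f z \<partial>count_space A \<partial>count_space (A \<times> B))"
  proof (rule nn_integral_cong)
    fix z assume "z \<in> space (count_space (A \<times> B))"
    then have "fst z \<in> A" by auto
    have "(\<integral>\<^sup>+a. indicator {a} (fst z) * f z \<partial>count_space A) = (\<integral>\<^sup>+a. indicator {fst z} a * f z \<partial>count_space A)"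
      by (rule nn_integral_cong) (auto split: split_indicator)
    also have "\<dots> = f z" by (rule nn_count_single) fact
    finally show "f z = (\<integral>\<^sup>+a. indicator {a} (fst z) * f z \<partial>count_space A)" ..
  qed
  also have "\<dots> = (\<integral>\<^sup>+a. \<integral>\<^sup>+z. indicator {a} (fst z) * f z \<partial>count_space (A \<times> B) \<partial>count_space A)"
    by (rule nn_integral_count_space_nn_integral[OF A]) auto
  also have "\<dots> = (\<integral>\<^sup>+a. \<integral>\<^sup>+b. f (a, b) \<partial>count_space B \<partial>count_space A)"
  proof (rule nn_integral_cong)
    fix a assume "a \<in> space (count_space A)"
    then have a: "a \<in> A" by simp
    have "(\<integral>\<^sup>+z. indicator {a} (fst z) * f z \<partial>count_space (A \<times> B)) =
          (\<integral>\<^sup>+z. indicator ({a} \<times> B) z * f z \<partial>count_space (A \<times> B))"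
      by (rule nn_integral_cong) (auto split: split_indicator)
    also have "\<dots> = (\<integral>\<^sup>+z. f z \<partial>count_space ({a} \<times> B))"
      by (rule nn_count_restrict) (use a in auto)
    also have "\<dots> = (\<integral>\<^sup>+b. f (a, b) \<partial>count_space B)"
      by (rule nn_integral_bij_count_space[symmetric]) (auto simp: bij_betw_def inj_on_def)
    finally show "(\<integral>\<^sup>+z. indicator {a} (fst z) * f z \<partial>count_space (A \<times> B)) = (\<integral>\<^sup>+b. f (a, b) \<partial>count_space B)" .
  qed
  finally show ?thesis .
qed

lemma nn_swap:
  fixes f :: "'a \<Rightarrow> 'b \<Rightarrow> ennreal"
  assumes "countable A"
  shows "(\<integral>\<^sup>+a. \<integral>\<^sup>+b. f a b \<partial>count_space B \<partial>count_space A) = (\<integral>\<^sup>+b. \<integral>\<^sup>+a. f a b \<partial>count_space A \<partial>count_space B)"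
proof -
  have "(\<integral>\<^sup>+b. \<integral>\<^sup>+a. f a b \<partial>count_space A \<partial>count_space B) = (\<integral>\<^sup>+a. \<integral>\<^sup>+b. f a b \<partial>count_space B \<partial>count_space A)"
    by (rule nn_integral_count_space_nn_integral[OF assms]) auto
  then show ?thesis by simp
qed

lemma conv_nn:
  fixes a b :: "nat \<Rightarrow> real" and f :: "nat \<Rightarrow> ennreal"
  assumes a: "\<And>x. 0 \<le> a x" and b: "\<And>x. 0 \<le> b x"
  shows "(\<integral>\<^sup>+x. \<integral>\<^sup>+y. ennreal (a x) * ennreal (b y) * f (x+y) \<partial>count_space UNIV \<partial>count_space UNIV)
       = (\<integral>\<^sup>+z. ennreal (\<Sum>x\<le>z. a x * b (z-x)) * f z \<partial>count_space UNIV)"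
proof -
  have "(\<integral>\<^sup>+z. ennreal (\<Sum>x\<le>z. a x * b (z-x)) * f z \<partial>count_space UNIV)
      = (\<integral>\<^sup>+z. \<integral>\<^sup>+x. indicator {..z} x * (ennreal (a x) * ennreal (b (z-x)) * f z) \<partial>count_space UNIV \<partial>count_space UNIV)"
  proof (rule nn_integral_cong)
    fix z :: nat
    have "ennreal (\<Sum>x\<le>z. a x * b (z-x)) * f z = (\<Sum>x\<le>z. ennreal (a x) * ennreal (b (z-x)) * f z)"
      using a b by (simp add: sum_distrib_right ennreal_mult[symmetric] sum_ennreal[symmetric] mult_nonneg_nonneg del: sum_ennreal)
    also have "\<dots> = (\<integral>\<^sup>+x. ennreal (a x) * ennreal (b (z-x)) * f z \<partial>count_space {..z})"
      by (simp add: nn_integral_count_space_finite)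
    also have "\<dots> = (\<integral>\<^sup>+x. indicator {..z} x * (ennreal (a x) * ennreal (b (z-x)) * f z) \<partial>count_space UNIV)"
      by (rule nn_count_restrict[symmetric]) simp
    finally show "ennreal (\<Sum>x\<le>z. a x * b (z-x)) * f z = \<dots>" .
  qed
  also have "\<dots> = (\<integral>\<^sup>+x. \<integral>\<^sup>+z. indicator {..z} x * (ennreal (a x) * ennreal (b (z-x)) * f z) \<partial>count_space UNIV \<partial>count_space UNIV)"
    by (rule nn_swap[symmetric]) simp
  also have "\<dots> = (\<integral>\<^sup>+x. \<integral>\<^sup>+y. ennreal (a x) * ennreal (b y) * f (x+y) \<partial>count_space UNIV \<partial>count_space UNIV)"
  proof (rule nn_integral_cong)
    fix x :: nat
    have "(\<integral>\<^sup>+z. indicator {..z} x * (ennreal (a x) * ennreal (b (z-x)) * f z) \<partial>count_space UNIV)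
       = (\<integral>\<^sup>+z. indicator {x..} z * (ennreal (a x) * ennreal (b (z-x)) * f z) \<partial>count_space UNIV)"
      by (rule nn_integral_cong) (auto split: split_indicator)
    also have "\<dots> = (\<integral>\<^sup>+z. ennreal (a x) * ennreal (b (z-x)) * f z \<partial>count_space {x..})"
      by (rule nn_count_restrict) simp
    also have "\<dots> = (\<integral>\<^sup>+y. ennreal (a x) * ennreal (b ((y+x)-x)) * f (y+x) \<partial>count_space UNIV)"
    proof (rule nn_integral_bij_count_space[symmetric])
      show "bij_betw (\<lambda>y. y + x) UNIV {x..}"
        by (rule bij_betw_byWitness[where f'="\<lambda>z. z - x"]) auto
    qed
    also have "\<dots> = (\<integral>\<^sup>+y. ennreal (a x) * ennreal (b y) * f (x+y) \<partial>count_space UNIV)"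
      by (simp add: add.commute)
    finally show "(\<integral>\<^sup>+z. indicator {..z} x * (ennreal (a x) * ennreal (b (z-x)) * f z) \<partial>count_space UNIV) = \<dots>" .
  qed
  finally show ?thesis ..
qed


lemma split_coord:
  fixes G :: "('v \<Rightarrow> nat) \<Rightarrow> ennreal"
  assumes "i \<notin> K"
  shows "(\<integral>\<^sup>+v. G v \<partial>count_space (PiE (insert i K) (\<lambda>_. UNIV)))
       = (\<integral>\<^sup>+x. \<integral>\<^sup>+w. G (w(i:=x)) \<partial>count_space (PiE K (\<lambda>_. UNIV)) \<partial>count_space UNIV)"
proof -
  have bij: "bij_betw (\<lambda>(y, g). g(i:=y)) (UNIV \<times> PiE K (\<lambda>_. UNIV)) (PiE (insert i K) (\<lambda>_. UNIV))"
  proof (rule bij_betw_imageI)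
    show "inj_on (\<lambda>(y, g). g(i:=y)) (UNIV \<times> PiE K (\<lambda>_. UNIV))"
    proof (rule inj_onI, clarify)
      fix y g y' g' assume g: "g \<in> PiE K (\<lambda>_. UNIV)" "g' \<in> PiE K (\<lambda>_. UNIV)" and eq: "g(i := y) = g'(i := y')"
      have "y = y'" using fun_cong[OF eq, of i] by simp
      moreover have "g = g'"
      proof
        fix j show "g j = g' j"
        proof (cases "j = i")
          case True then show ?thesis using g assms by (auto simp: PiE_def extensional_def)
        next
          case False then show ?thesis using fun_cong[OF eq, of j] by simp
        qed
      qed
      ultimately show "y = y' \<and> g = g'" by simp
    qed
    show "(\<lambda>(y, g). g(i:=y)) ` (UNIV \<times> PiE K (\<lambda>_. UNIV)) = PiE (insert i K) (\<lambda>_. UNIV)"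
      by (simp add: PiE_insert_eq)
  qed
  have "(\<integral>\<^sup>+v. G v \<partial>count_space (PiE (insert i K) (\<lambda>_. UNIV)))
      = (\<integral>\<^sup>+z. G ((\<lambda>(y, g). g(i:=y)) z) \<partial>count_space (UNIV \<times> PiE K (\<lambda>_. UNIV)))"
    by (rule nn_integral_bij_count_space[OF bij, symmetric])
  also have "\<dots> = (\<integral>\<^sup>+x. \<integral>\<^sup>+w. G (w(i:=x)) \<partial>count_space (PiE K (\<lambda>_. UNIV)) \<partial>count_space UNIV)"
    by (subst nn_count_Sigma) auto
  finally show ?thesis .
qed

context bdp begin

abbreviation ep where "ep t n x \<equiv> ennreal (p t n x)"

lemma delta0: assumes "t \<ge> 0" shows "(\<integral>\<^sup>+x. ep t 0 x * g x \<partial>count_space UNIV) = g 0"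
proof -
  have "(\<integral>\<^sup>+x. ep t 0 x * g x \<partial>count_space UNIV) = (\<integral>\<^sup>+x. indicator {0::nat} x * g 0 \<partial>count_space UNIV)"
  proof (rule nn_integral_cong)
    fix x :: nat show "ep t 0 x * g x = indicator {0} x * g 0"
      by (cases "x = 0") (simp_all add: p_zero[OF assms])
  qed
  also have "\<dots> = g 0" by (rule nn_count_single) simp
  finally show ?thesis .
qed

lemma conv2: assumes t: "t \<ge> 0"
  shows "(\<integral>\<^sup>+x. \<integral>\<^sup>+y. ep t u x * ep t v y * f (x+y) \<partial>count_space UNIV \<partial>count_space UNIV)
       = (\<integral>\<^sup>+z. ep t (u+v) z * f z \<partial>count_space UNIV)"
  using conv_nn[of "p t u" "p t v" f] nonneg[OF t] conv[OF t] by simp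

lemma collapse1:
  assumes K: "finite K" and t: "t \<ge> 0"
  shows "(\<integral>\<^sup>+w. (\<Prod>i\<in>K. ep t (n i) (w i)) * f (\<Sum>i\<in>K. w i) \<partial>count_space (PiE K (\<lambda>_. UNIV)))
       = (\<integral>\<^sup>+z. ep t (\<Sum>i\<in>K. n i) z * f z \<partial>count_space UNIV)"
  using K
proof (induction K arbitrary: f rule: finite_induct)
  case empty
  have "(\<integral>\<^sup>+w. (\<Prod>i\<in>{}. ep t (n i) (w i)) * f (\<Sum>i\<in>{}. w i) \<partial>count_space (PiE {} (\<lambda>_. UNIV::nat set))) = f 0"
    by (simp add: nn_integral_count_space_finite)
  also have "\<dots> = (\<integral>\<^sup>+z. ep t 0 z * f z \<partial>count_space UNIV)" by (rule delta0[OF t, symmetric])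
  finally show ?case by simp
next
  case (insert i K)
  have "(\<integral>\<^sup>+w. (\<Prod>j\<in>insert i K. ep t (n j) (w j)) * f (\<Sum>j\<in>insert i K. w j) \<partial>count_space (PiE (insert i K) (\<lambda>_. UNIV)))
      = (\<integral>\<^sup>+x. \<integral>\<^sup>+w. ep t (n i) x * ((\<Prod>j\<in>K. ep t (n j) (w j)) * f (x + (\<Sum>j\<in>K. w j))) \<partial>count_space (PiE K (\<lambda>_. UNIV)) \<partial>count_space UNIV)"
    unfolding split_coord[OF insert(2)]
  proof (rule nn_integral_cong, rule nn_integral_cong)
    fix x w assume "w \<in> space (count_space (PiE K (\<lambda>_. UNIV::nat set)))"
    have p: "(\<Prod>j\<in>K. ep t (n j) ((w(i:=x)) j)) = (\<Prod>j\<in>K. ep t (n j) (w j))"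
      by (rule prod.cong) (use insert(2) in auto)
    have s: "(\<Sum>j\<in>K. (w(i:=x)) j) = (\<Sum>j\<in>K. w j)"
      by (rule sum.cong) (use insert(2) in auto)
    show "(\<Prod>j\<in>insert i K. ep t (n j) ((w(i:=x)) j)) * f (\<Sum>j\<in>insert i K. (w(i:=x)) j)
        = ep t (n i) x * ((\<Prod>j\<in>K. ep t (n j) (w j)) * f (x + (\<Sum>j\<in>K. w j)))"
      using insert(1,2) p s by (simp add: mult.assoc)
  qed
  also have "\<dots> = (\<integral>\<^sup>+x. ep t (n i) x * (\<integral>\<^sup>+w. (\<Prod>j\<in>K. ep t (n j) (w j)) * f (x + (\<Sum>j\<in>K. w j)) \<partial>count_space (PiE K (\<lambda>_. UNIV))) \<partial>count_space UNIV)"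
    by (rule nn_integral_cong, rule nn_integral_cmult) simp
  also have "\<dots> = (\<integral>\<^sup>+x. ep t (n i) x * (\<integral>\<^sup>+y. ep t (\<Sum>j\<in>K. n j) y * f (x + y) \<partial>count_space UNIV) \<partial>count_space UNIV)"
    using insert(3)[of "\<lambda>s. f (_ + s)"] by simp
  also have "\<dots> = (\<integral>\<^sup>+x. \<integral>\<^sup>+y. ep t (n i) x * ep t (\<Sum>j\<in>K. n j) y * f (x + y) \<partial>count_space UNIV \<partial>count_space UNIV)"
    by (rule nn_integral_cong) (simp add: nn_integral_cmult[symmetric] mult.assoc)
  also have "\<dots> = (\<integral>\<^sup>+z. ep t (n i + (\<Sum>j\<in>K. n j)) z * f z \<partial>count_space UNIV)"
    by (rule conv2[OF t])
  finally show ?case using insert(1,2) by simp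
qed

end


definition Rr :: "nat \<Rightarrow> nat \<Rightarrow> ennreal" where
  "Rr x y = ennreal (if x + y > 0 then real x / real (x+y) else 0)"

lemma Rr_split: "Rr (x1 + x2) y = Rr x1 (x2 + y) + Rr x2 (x1 + y)"
proof (cases "x1 + x2 + y > 0")
  case True
  have c: "x1 + (x2 + y) > 0" "x2 + (x1 + y) > 0" "x1 + x2 + y > 0" using True by auto
  have eq: "real (x1+x2)/real(x1+x2+y) = real x1/real(x1+(x2+y)) + real x2/real(x2+(x1+y))"
    by (simp add: add_divide_distrib add_ac)
  have nn: "real x1/real(x1+(x2+y)) \<ge> 0" "real x2/real(x2+(x1+y)) \<ge> 0" by simp_all
  show ?thesis unfolding Rr_def using c eq nn by (simp add: ennreal_plus[symmetric] del: ennreal_plus)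
next
  case False then show ?thesis by (simp add: Rr_def)
qed

lemma Rr_0: "Rr 0 y = 0" by (simp add: Rr_def)

lemma nn_cmult_count: "(\<integral>\<^sup>+x. c * f x \<partial>count_space A) = c * (\<integral>\<^sup>+x. f x \<partial>count_space A)"
  by (rule nn_integral_cmult) simp

context bdp begin

definition F :: "real \<Rightarrow> nat \<Rightarrow> nat \<Rightarrow> ennreal" where
  "F t a c = (\<integral>\<^sup>+x. \<integral>\<^sup>+y. ep t a x * ep t c y * Rr x y \<partial>count_space UNIV \<partial>count_space UNIV)"

lemma F_alt: "F t a c = (\<integral>\<^sup>+x. ep t a x * (\<integral>\<^sup>+y. ep t c y * Rr x y \<partial>count_space UNIV) \<partial>count_space UNIV)"
  unfolding F_def by (simp add: nn_cmult_count[symmetric] mult.assoc)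

lemma F_zero: "t \<ge> 0 \<Longrightarrow> F t 0 c = 0"
  unfolding F_alt by (simp add: delta0 Rr_0)

lemma F_rec: assumes t: "t \<ge> 0"
  shows "F t (Suc a) c = F t 1 (a + c) + F t a (Suc c)"
proof -
  define h where "h x = (\<integral>\<^sup>+y. ep t c y * Rr x y \<partial>count_space UNIV)" for x
  have "F t (Suc a) c = (\<integral>\<^sup>+x. ep t (1 + a) x * h x \<partial>count_space UNIV)"
    unfolding F_alt h_def by simp
  also have "\<dots> = (\<integral>\<^sup>+x1. \<integral>\<^sup>+x2. ep t 1 x1 * ep t a x2 * h (x1 + x2) \<partial>count_space UNIV \<partial>count_space UNIV)"
    by (rule conv2[OF t, symmetric])
  also have "\<dots> = (\<integral>\<^sup>+x1. \<integral>\<^sup>+x2. ep t 1 x1 * ep t a x2 * (\<integral>\<^sup>+y. ep t c y * Rr x1 (x2 + y) \<partial>count_space UNIV)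
                  + ep t 1 x1 * ep t a x2 * (\<integral>\<^sup>+y. ep t c y * Rr x2 (x1 + y) \<partial>count_space UNIV) \<partial>count_space UNIV \<partial>count_space UNIV)"
    unfolding h_def Rr_split
    by (simp add: distrib_left nn_integral_add)
  also have "\<dots> = (\<integral>\<^sup>+x1. \<integral>\<^sup>+x2. ep t 1 x1 * ep t a x2 * (\<integral>\<^sup>+y. ep t c y * Rr x1 (x2 + y) \<partial>count_space UNIV) \<partial>count_space UNIV \<partial>count_space UNIV)
      + (\<integral>\<^sup>+x1. \<integral>\<^sup>+x2. ep t 1 x1 * ep t a x2 * (\<integral>\<^sup>+y. ep t c y * Rr x2 (x1 + y) \<partial>count_space UNIV) \<partial>count_space UNIV \<partial>count_space UNIV)"
    by (simp add: nn_integral_add)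
  also have "(\<integral>\<^sup>+x1. \<integral>\<^sup>+x2. ep t 1 x1 * ep t a x2 * (\<integral>\<^sup>+y. ep t c y * Rr x1 (x2 + y) \<partial>count_space UNIV) \<partial>count_space UNIV \<partial>count_space UNIV)
      = F t 1 (a + c)"
  proof -
    have "(\<integral>\<^sup>+x1. \<integral>\<^sup>+x2. ep t 1 x1 * ep t a x2 * (\<integral>\<^sup>+y. ep t c y * Rr x1 (x2 + y) \<partial>count_space UNIV) \<partial>count_space UNIV \<partial>count_space UNIV)
       = (\<integral>\<^sup>+x1. ep t 1 x1 * (\<integral>\<^sup>+x2. \<integral>\<^sup>+y. ep t a x2 * ep t c y * Rr x1 (x2 + y) \<partial>count_space UNIV \<partial>count_space UNIV) \<partial>count_space UNIV)"
      by (simp add: nn_cmult_count[symmetric] mult.assoc)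
    also have "\<dots> = (\<integral>\<^sup>+x1. ep t 1 x1 * (\<integral>\<^sup>+s. ep t (a + c) s * Rr x1 s \<partial>count_space UNIV) \<partial>count_space UNIV)"
      using conv2[OF t, of a c "\<lambda>s. Rr _ s"] by simp
    also have "\<dots> = F t 1 (a + c)" unfolding F_alt ..
    finally show ?thesis .
  qed
  also have "(\<integral>\<^sup>+x1. \<integral>\<^sup>+x2. ep t 1 x1 * ep t a x2 * (\<integral>\<^sup>+y. ep t c y * Rr x2 (x1 + y) \<partial>count_space UNIV) \<partial>count_space UNIV \<partial>count_space UNIV)
      = F t a (Suc c)"
  proof -
    have "(\<integral>\<^sup>+x1. \<integral>\<^sup>+x2. ep t 1 x1 * ep t a x2 * (\<integral>\<^sup>+y. ep t c y * Rr x2 (x1 + y) \<partial>count_space UNIV) \<partial>count_space UNIV \<partial>count_space UNIV)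
       = (\<integral>\<^sup>+x2. \<integral>\<^sup>+x1. ep t 1 x1 * ep t a x2 * (\<integral>\<^sup>+y. ep t c y * Rr x2 (x1 + y) \<partial>count_space UNIV) \<partial>count_space UNIV \<partial>count_space UNIV)"
      by (rule nn_swap) simp
    also have "\<dots> = (\<integral>\<^sup>+x2. ep t a x2 * (\<integral>\<^sup>+x1. \<integral>\<^sup>+y. ep t 1 x1 * ep t c y * Rr x2 (x1 + y) \<partial>count_space UNIV \<partial>count_space UNIV) \<partial>count_space UNIV)"
      by (simp add: nn_cmult_count[symmetric] mult_ac)
    also have "\<dots> = (\<integral>\<^sup>+x2. ep t a x2 * (\<integral>\<^sup>+s. ep t (1 + c) s * Rr x2 s \<partial>count_space UNIV) \<partial>count_space UNIV)"
      using conv2[OF t, of 1 c "\<lambda>s. Rr _ s"] by simp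
    also have "\<dots> = F t a (Suc c)" unfolding F_alt by simp
    finally show ?thesis .
  qed
  finally show ?thesis .
qed

lemma F_lin: assumes t: "t \<ge> 0" and "a \<le> n"
  shows "F t a (n - a) = of_nat a * F t 1 (n - 1)"
  using assms(2)
proof (induction a)
  case 0 then show ?case using F_zero[OF t] by simp
next
  case (Suc a)
  have e1: "F t (Suc a) (n - Suc a) = F t 1 (a + (n - Suc a)) + F t a (Suc (n - Suc a))"
    using F_rec[OF t] by blast
  have e2: "a + (n - Suc a) = n - 1" "Suc (n - Suc a) = n - a" using Suc.prems by auto
  show ?case using Suc e1 e2 by (simp add: distrib_right)
qed

lemma ep_total: assumes t: "t \<ge> 0" shows "(\<integral>\<^sup>+x. ep t n x \<partial>count_space UNIV) \<le> 1"
proof -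
  have "(\<integral>\<^sup>+x. ep t n x \<partial>count_space UNIV) = (\<Sum>x. ep t n x)" by (rule nn_integral_count_space_nat)
  also have "\<dots> = ennreal (suminf (p t n))" by (rule suminf_ennreal2) (use nonneg[OF t] summ[OF t] in auto)
  also have "\<dots> \<le> 1" using suminf_le1[OF t] by simp
  finally show ?thesis .
qed

lemma F_bound: assumes t: "t \<ge> 0" and "a + c > 0"
  shows "F t a c \<le> ennreal (real a / real (a + c))"
proof -
  define n where "n = a + c"
  have n: "n \<ge> 1" using assms(2) unfolding n_def by arith
  have "F t n 0 \<le> 1"
  proof -
    have "F t n 0 = (\<integral>\<^sup>+x. ep t n x * Rr x 0 \<partial>count_space UNIV)"
      unfolding F_alt using delta0[OF t, of "\<lambda>y. Rr _ y"] by (simp add: mult_ac)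
    also have "\<dots> \<le> (\<integral>\<^sup>+x. ep t n x \<partial>count_space UNIV)"
      by (rule nn_integral_mono) (auto simp: Rr_def intro!: mult_left_le)
    also have "\<dots> \<le> 1" by (rule ep_total[OF t])
    finally show ?thesis .
  qed
  moreover have "F t n 0 = of_nat n * F t 1 (n - 1)" using F_lin[OF t, of n n] by simp
  ultimately have X: "of_nat n * F t 1 (n - 1) \<le> 1" by simp
  then have "F t 1 (n - 1) \<noteq> \<top>" using n by (auto simp: ennreal_mult_eq_top_iff top_unique)
  then obtain x where x: "F t 1 (n - 1) = ennreal x" "x \<ge> 0" by (cases "F t 1 (n - 1)") auto
  have "ennreal (real n * x) \<le> 1" using X x by (simp add: ennreal_mult ennreal_of_nat_eq_real_of_nat)
  then have nx: "real n * x \<le> 1" by (simp add: ennreal_le_1)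
  have "F t a c = of_nat a * F t 1 (n - 1)" using F_lin[OF t, of a n] unfolding n_def by simp
  also have "\<dots> = ennreal (real a * x)" using x by (simp add: ennreal_mult ennreal_of_nat_eq_real_of_nat)
  also have "\<dots> \<le> ennreal (real a / real n)"
  proof (rule ennreal_leI)
    have "real a * (real n * x) \<le> real a * 1" using nx by (intro mult_left_mono) auto
    then have "real a * x * real n \<le> real a" by (simp add: algebra_simps)
    moreover have "real n > 0" using n by simp
    ultimately show "real a * x \<le> real a / real n" by (simp add: pos_le_divide_eq)
  qed
  finally show ?thesis unfolding n_def .
qed

end


definition gr :: "'v set \<Rightarrow> 'v set \<Rightarrow> ('v \<Rightarrow> nat) \<Rightarrow> real" where
  "gr I J v = (if (\<Sum>i\<in>I. v i) > 0 then real (\<Sum>i\<in>J. v i) / real (\<Sum>i\<in>I. v i) else 0)"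

lemma gr_decomp:
  assumes I: "finite I" and J: "J \<subseteq> I"
  shows "ennreal (gr I J v) = (\<Sum>i0\<in>J. Rr (v i0) (\<Sum>i\<in>I-{i0}. v i))"
proof -
  have S: "(\<Sum>i\<in>I. v i) = v i0 + (\<Sum>i\<in>I-{i0}. v i)" if "i0 \<in> J" for i0
    using that J I by (intro sum.remove) auto
  show ?thesis
  proof (cases "(\<Sum>i\<in>I. v i) > 0")
    case False
    then show ?thesis unfolding gr_def Rr_def using S by (auto intro!: sum.neutral)
  next
    case True
    have "(\<Sum>i0\<in>J. Rr (v i0) (\<Sum>i\<in>I-{i0}. v i)) = (\<Sum>i0\<in>J. ennreal (real (v i0) / real (\<Sum>i\<in>I. v i)))"
      by (rule sum.cong) (use True S in \<open>auto simp: Rr_def\<close>)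
    also have "\<dots> = ennreal (\<Sum>i0\<in>J. real (v i0) / real (\<Sum>i\<in>I. v i))" by (rule sum_ennreal) (auto intro!: divide_nonneg_nonneg sum_nonneg)
    also have "(\<Sum>i0\<in>J. real (v i0) / real (\<Sum>i\<in>I. v i)) = gr I J v"
      unfolding gr_def using True by (simp add: sum_divide_distrib[symmetric])
    finally show ?thesis ..
  qed
qed

context bdp begin

lemma F_le_Rr: "t \<ge> 0 \<Longrightarrow> F t a c \<le> Rr a c"
  using F_bound[of t a c] F_zero[of t c] by (cases "a + c > 0") (auto simp: Rr_def)

lemma crux:
  assumes I: "finite I" and J: "J \<subseteq> I" and t: "t \<ge> 0"
  shows "(\<integral>\<^sup>+v. (\<Prod>i\<in>I. ep t (n i) (v i)) * ennreal (gr I J v) \<partial>count_space (PiE I (\<lambda>_. UNIV)))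
       \<le> ennreal (gr I J n)"
proof -
  have hterm: "(\<integral>\<^sup>+v. (\<Prod>i\<in>I. ep t (n i) (v i)) * Rr (v i0) (\<Sum>i\<in>I-{i0}. v i) \<partial>count_space (PiE I (\<lambda>_. UNIV)))
      = F t (n i0) (\<Sum>i\<in>I-{i0}. n i)" if i0: "i0 \<in> I" for i0
  proof -
    have Ieq: "I = insert i0 (I - {i0})" using i0 by auto
    have PI: "PiE I (\<lambda>_. UNIV::nat set) = PiE (insert i0 (I-{i0})) (\<lambda>_. UNIV)" using Ieq by simp
    have nin: "i0 \<notin> I - {i0}" by simp
    have "(\<integral>\<^sup>+v. (\<Prod>i\<in>I. ep t (n i) (v i)) * Rr (v i0) (\<Sum>i\<in>I-{i0}. v i) \<partial>count_space (PiE I (\<lambda>_. UNIV)))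
        = (\<integral>\<^sup>+x. \<integral>\<^sup>+w. ep t (n i0) x * ((\<Prod>i\<in>I-{i0}. ep t (n i) (w i)) * Rr x (\<Sum>i\<in>I-{i0}. w i)) \<partial>count_space (PiE (I-{i0}) (\<lambda>_. UNIV)) \<partial>count_space UNIV)"
      unfolding PI split_coord[OF nin]
    proof (rule nn_integral_cong, rule nn_integral_cong)
      fix x w
      have p: "(\<Prod>j\<in>I-{i0}. ep t (n j) ((w(i0:=x)) j)) = (\<Prod>j\<in>I-{i0}. ep t (n j) (w j))"
        by (rule prod.cong) auto
      have s: "(\<Sum>j\<in>I-{i0}. (w(i0:=x)) j) = (\<Sum>j\<in>I-{i0}. w j)"
        by (rule sum.cong) auto
      have pi: "(\<Prod>j\<in>I. ep t (n j) ((w(i0:=x)) j)) = ep t (n i0) x * (\<Prod>j\<in>I-{i0}. ep t (n j) ((w(i0:=x)) j))"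
        using I i0 by (subst prod.remove[of I i0]) auto
      show "(\<Prod>j\<in>I. ep t (n j) ((w(i0:=x)) j)) * Rr ((w(i0:=x)) i0) (\<Sum>j\<in>I-{i0}. (w(i0:=x)) j)
          = ep t (n i0) x * ((\<Prod>j\<in>I-{i0}. ep t (n j) (w j)) * Rr x (\<Sum>j\<in>I-{i0}. w j))"
        unfolding pi p using s by (simp add: mult.assoc)
    qed
    also have "\<dots> = (\<integral>\<^sup>+x. ep t (n i0) x * (\<integral>\<^sup>+w. (\<Prod>i\<in>I-{i0}. ep t (n i) (w i)) * Rr x (\<Sum>i\<in>I-{i0}. w i) \<partial>count_space (PiE (I-{i0}) (\<lambda>_. UNIV))) \<partial>count_space UNIV)"
      by (simp add: nn_cmult_count)
    also have "\<dots> = (\<integral>\<^sup>+x. ep t (n i0) x * (\<integral>\<^sup>+z. ep t (\<Sum>i\<in>I-{i0}. n i) z * Rr x z \<partial>count_space UNIV) \<partial>count_space UNIV)"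
      using collapse1[of "I-{i0}" t n "Rr _"] I t by simp
    also have "\<dots> = F t (n i0) (\<Sum>i\<in>I-{i0}. n i)" unfolding F_alt ..
    finally show ?thesis .
  qed
  have "(\<integral>\<^sup>+v. (\<Prod>i\<in>I. ep t (n i) (v i)) * ennreal (gr I J v) \<partial>count_space (PiE I (\<lambda>_. UNIV)))
      = (\<integral>\<^sup>+v. (\<Sum>i0\<in>J. (\<Prod>i\<in>I. ep t (n i) (v i)) * Rr (v i0) (\<Sum>i\<in>I-{i0}. v i)) \<partial>count_space (PiE I (\<lambda>_. UNIV)))"
    unfolding gr_decomp[OF I J] by (simp add: sum_distrib_left)
  also have "\<dots> = (\<Sum>i0\<in>J. \<integral>\<^sup>+v. (\<Prod>i\<in>I. ep t (n i) (v i)) * Rr (v i0) (\<Sum>i\<in>I-{i0}. v i) \<partial>count_space (PiE I (\<lambda>_. UNIV)))"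
    by (rule nn_integral_sum) simp
  also have "\<dots> = (\<Sum>i0\<in>J. F t (n i0) (\<Sum>i\<in>I-{i0}. n i))"
    by (rule sum.cong) (use hterm J in auto)
  also have "\<dots> \<le> (\<Sum>i0\<in>J. Rr (n i0) (\<Sum>i\<in>I-{i0}. n i))"
    by (rule sum_mono) (rule F_le_Rr[OF t])
  also have "\<dots> = ennreal (gr I J n)" by (rule gr_decomp[OF I J, symmetric])
  finally show ?thesis .
qed

end


lemma gr_cong: assumes "J \<subseteq> I" "\<And>i. i \<in> I \<Longrightarrow> v i = v' i" shows "gr I J v = gr I J v'"
proof -
  have "sum v I = sum v' I" by (rule sum.cong) (use assms in auto)
  moreover have "sum v J = sum v' J" by (rule sum.cong) (use assms in auto)
  ultimately show ?thesis unfolding gr_def by simp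
qed

lemma gr_nonneg: "gr I J v \<ge> 0"
  unfolding gr_def using divide_nonneg_nonneg[of "real (sum v J)" "real (sum v I)"] by (auto simp del: of_nat_sum)

locale fam = bdp r q p for r q p +
  fixes M :: "'w measure" and V :: "'v set" and N :: "'v \<Rightarrow> real \<Rightarrow> 'w \<Rightarrow> nat"
  assumes prob: "prob_space M"
    and measN: "\<And>i t. i \<in> V \<Longrightarrow> t \<ge> 0 \<Longrightarrow> N i t \<in> measurable M (count_space UNIV)"
    and fam: "iid_bd_family M V N p"
begin

lemma pred_vec:
  assumes I: "finite I" "I \<subseteq> V" and t: "t \<ge> 0"
  shows "{\<omega>\<in>space M. P (restrict (\<lambda>i. N i t \<omega>) I)} \<in> sets M"
proof -
  have cyl: "{\<omega>\<in>space M. \<forall>i\<in>I. N i t \<omega> = v i} \<in> sets M" for v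
  proof (rule sets.sets_Collect_finite_All[OF _ I(1)])
    fix i assume "i \<in> I"
    then have "N i t \<in> measurable M (count_space UNIV)" using measN I t by auto
    then have "N i t -` {v i} \<inter> space M \<in> sets M" by (rule measurable_sets) simp
    moreover have "{\<omega>\<in>space M. N i t \<omega> = v i} = N i t -` {v i} \<inter> space M" by auto
    ultimately show "{\<omega>\<in>space M. N i t \<omega> = v i} \<in> sets M" by simp
  qed
  have "{\<omega>\<in>space M. P (restrict (\<lambda>i. N i t \<omega>) I)} =
        (\<Union>v\<in>{v\<in>PiE I (\<lambda>_. UNIV). P v}. {\<omega>\<in>space M. \<forall>i\<in>I. N i t \<omega> = v i})"
  proof safe
    fix \<omega> assume "\<omega> \<in> space M" "P (restrict (\<lambda>i. N i t \<omega>) I)"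
    then show "\<omega> \<in> (\<Union>v\<in>{v\<in>PiE I (\<lambda>_. UNIV). P v}. {\<omega>\<in>space M. \<forall>i\<in>I. N i t \<omega> = v i})"
      by (intro UN_I[of "restrict (\<lambda>i. N i t \<omega>) I"]) auto
  next
    fix \<omega> v assume "v \<in> PiE I (\<lambda>_. UNIV)" "P v" "\<omega> \<in> space M" "\<forall>i\<in>I. N i t \<omega> = v i"
    moreover have "restrict (\<lambda>i. N i t \<omega>) I = v"
      using calculation by (auto simp: PiE_def extensional_def restrict_def)
    ultimately show "P (restrict (\<lambda>i. N i t \<omega>) I)" by simp
  qed
  also have "\<dots> \<in> sets M"
    by (rule sets.countable_UN'') (auto intro: cyl countable_subset[OF _ countable_PiE[OF I(1)]])
  finally show ?thesis .
qed

lemma pred_gr: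
  assumes I: "finite I" "I \<subseteq> V" and J: "J \<subseteq> I" and t: "t \<ge> 0"
  shows "{\<omega>\<in>space M. Q (gr I J (\<lambda>i. N i t \<omega>))} \<in> sets M"
proof -
  have "{\<omega>\<in>space M. Q (gr I J (\<lambda>i. N i t \<omega>))} = {\<omega>\<in>space M. Q (gr I J (restrict (\<lambda>i. N i t \<omega>) I))}"
  proof -
    have "gr I J (\<lambda>i. N i t \<omega>) = gr I J (restrict (\<lambda>i. N i t \<omega>) I)" for \<omega>
      by (rule gr_cong[OF J]) simp
    then show ?thesis by simp
  qed
  then show ?thesis using pred_vec[OF I t] by simp
qed

end

locale grid = fam r q p M V N
  for r q p and M :: "'w measure" and V :: "'v set" and N :: "'v \<Rightarrow> real \<Rightarrow> 'w \<Rightarrow> nat" +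
  fixes I J :: "'v set" and ts :: "nat \<Rightarrow> real" and K :: nat and c :: real
  assumes I: "finite I" "I \<subseteq> V" and J: "J \<subseteq> I" and ts0: "ts 0 = 0"
    and tsinc: "\<And>l. l < K \<Longrightarrow> ts l < ts (Suc l)" and c: "c > 0"
begin

lemma ts_nonneg: "l \<le> K \<Longrightarrow> ts l \<ge> 0"
proof (induction l)
  case 0 then show ?case using ts0 by simp
next
  case (Suc l) then show ?case using tsinc[of l] by simp
qed

definition cyl :: "nat \<Rightarrow> (nat \<Rightarrow> 'v \<Rightarrow> nat) \<Rightarrow> 'w set" where
  "cyl j h = {\<omega>\<in>space M. \<forall>i\<in>I. \<forall>l\<le>j. N i (ts l) \<omega> = h l i}"

definition pic :: "nat \<Rightarrow> (nat \<Rightarrow> 'v \<Rightarrow> nat) \<Rightarrow> real" where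
  "pic j h = (\<Prod>i\<in>I. (if h 0 i = 1 then 1 else 0) * (\<Prod>l<j. p (ts (Suc l) - ts l) (h l i) (h (Suc l) i)))"

definition Ev :: "nat \<Rightarrow> 'w set" where
  "Ev j = {\<omega>\<in>space M. \<exists>l\<in>{j..K}. gr I J (\<lambda>i. N i (ts l) \<omega>) > c}"

lemma cyl_sets: assumes jK: "j \<le> K" shows "cyl j h \<in> sets M"
  unfolding cyl_def
proof (rule sets.sets_Collect_finite_All[OF _ I(1)])
  fix i assume i: "i \<in> I"
  have "{\<omega>\<in>space M. \<forall>l\<in>{..j}. N i (ts l) \<omega> = h l i} \<in> sets M"
  proof (rule sets.sets_Collect_finite_All)
    fix l assume l: "l \<in> {..j}"
    have "N i (ts l) \<in> measurable M (count_space UNIV)"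
      using measN[of i "ts l"] i I ts_nonneg[of l] l jK by auto
    then have "N i (ts l) -` {h l i} \<inter> space M \<in> sets M" by (rule measurable_sets) simp
    moreover have "{\<omega>\<in>space M. N i (ts l) \<omega> = h l i} = N i (ts l) -` {h l i} \<inter> space M" by auto
    ultimately show "{\<omega>\<in>space M. N i (ts l) \<omega> = h l i} \<in> sets M" by simp
  qed simp
  then show "{\<omega>\<in>space M. \<forall>l\<le>j. N i (ts l) \<omega> = h l i} \<in> sets M" by (simp only: Ball_def atMost_iff)
qed

lemma cyl_measure: assumes "j \<le> K" shows "measure M (cyl j h) = pic j h"
proof -
  have inc: "\<And>l. l < j \<Longrightarrow> ts l < ts (Suc l)" using tsinc assms by auto
  show ?thesis unfolding cyl_def pic_def
    using fam[unfolded iid_bd_family_def, rule_format, where m="\<lambda>i l. h l i", OF I(1) I(2) ts0 inc] by simp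
qed

lemma Ev_sets: "Ev j \<in> sets M"
proof -
  have "Ev j = (\<Union>l\<in>{j..K}. {\<omega>\<in>space M. gr I J (\<lambda>i. N i (ts l) \<omega>) > c})"
    unfolding Ev_def by auto
  also have "\<dots> \<in> sets M"
  proof (rule sets.finite_UN)
    fix l assume "l \<in> {j..K}"
    then have "ts l \<ge> 0" using ts_nonneg by simp
    then show "{\<omega>\<in>space M. gr I J (\<lambda>i. N i (ts l) \<omega>) > c} \<in> sets M"
      by (rule pred_gr[OF I J])
  qed simp
  finally show ?thesis .
qed

end


context grid begin

lemma emeas_cyl: "j \<le> K \<Longrightarrow> emeasure M (cyl j h) = ennreal (pic j h)"
proof -
  interpret prob_space M by (rule prob)
  show "j \<le> K \<Longrightarrow> emeasure M (cyl j h) = ennreal (pic j h)"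
    using emeasure_eq_measure cyl_measure by simp
qed

lemma min1: "gr I J v > c \<Longrightarrow> min 1 (gr I J v / c) = 1"
  using c by (simp add: min_def le_divide_eq_1_pos)

lemma pic_nonneg: "j \<le> K \<Longrightarrow> pic j h \<ge> 0"
  unfolding pic_def
  by (intro prod_nonneg mult_nonneg_nonneg nonneg) (auto simp: less_imp_le[OF tsinc])

lemma gr_on_cyl: "\<omega> \<in> cyl j h \<Longrightarrow> l \<le> j \<Longrightarrow> gr I J (\<lambda>i. N i (ts l) \<omega>) = gr I J (h l)"
  unfolding cyl_def by (intro gr_cong[OF J]) auto

lemma pic_Suc: "pic (Suc j) (h(Suc j := v)) = pic j h * (\<Prod>i\<in>I. p (ts (Suc j) - ts j) (h j i) (v i))"
proof -
  have "pic (Suc j) (h(Suc j := v)) = (\<Prod>i\<in>I. ((if h 0 i = 1 then 1 else 0) * (\<Prod>l<j. p (ts (Suc l) - ts l) (h l i) (h (Suc l) i)))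
         * p (ts (Suc j) - ts j) (h j i) (v i))"
    unfolding pic_def
  proof (rule prod.cong[OF refl])
    fix i
    have "(\<Prod>l<j. p (ts (Suc l) - ts l) ((h(Suc j := v)) l i) ((h(Suc j := v)) (Suc l) i))
        = (\<Prod>l<j. p (ts (Suc l) - ts l) (h l i) (h (Suc l) i))"
      by (rule prod.cong) auto
    then show "(if (h(Suc j := v)) 0 i = 1 then 1 else 0) *
          (\<Prod>l<Suc j. p (ts (Suc l) - ts l) ((h(Suc j := v)) l i) ((h(Suc j := v)) (Suc l) i)) =
          (if h 0 i = 1 then 1 else 0) * (\<Prod>l<j. p (ts (Suc l) - ts l) (h l i) (h (Suc l) i)) *
          p (ts (Suc j) - ts j) (h j i) (v i)"
      by (simp add: mult.assoc)
  qed
  also have "\<dots> = pic j h * (\<Prod>i\<in>I. p (ts (Suc j) - ts j) (h j i) (v i))"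
    unfolding pic_def by (rule prod.distrib)
  finally show ?thesis .
qed

lemma cyl_union:
  assumes j: "j < K" and g: "\<not> gr I J (h j) > c"
  shows "cyl j h \<inter> Ev j = (\<Union>v\<in>PiE I (\<lambda>_. UNIV). cyl (Suc j) (h(Suc j := v)) \<inter> Ev (Suc j))"
proof safe
  fix \<omega> assume cy: "\<omega> \<in> cyl j h" and ev: "\<omega> \<in> Ev j"
  define v where "v = restrict (\<lambda>i. N i (ts (Suc j)) \<omega>) I"
  obtain l where l: "l \<in> {j..K}" "gr I J (\<lambda>i. N i (ts l) \<omega>) > c" using ev unfolding Ev_def by auto
  have "l \<noteq> j" using gr_on_cyl[OF cy, of j] l g by auto
  then have "\<omega> \<in> Ev (Suc j)" using l ev unfolding Ev_def by auto
  moreover have "\<omega> \<in> cyl (Suc j) (h(Suc j := v))"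
    using cy unfolding cyl_def v_def by (auto simp: le_Suc_eq)
  moreover have "v \<in> PiE I (\<lambda>_. UNIV)" unfolding v_def by simp
  ultimately show "\<omega> \<in> (\<Union>v\<in>PiE I (\<lambda>_. UNIV). cyl (Suc j) (h(Suc j := v)) \<inter> Ev (Suc j))" by blast
next
  fix \<omega> v assume "\<omega> \<in> cyl (Suc j) (h(Suc j := v))"
  then show "\<omega> \<in> cyl j h" unfolding cyl_def by auto
next
  fix \<omega> v assume "\<omega> \<in> Ev (Suc j)"
  then show "\<omega> \<in> Ev j" unfolding Ev_def by force
qed

lemma Ev_bound:
  assumes "d \<le> K"
  shows "emeasure M (cyl (K - d) h \<inter> Ev (K - d)) \<le> ennreal (pic (K - d) h) * ennreal (min 1 (gr I J (h (K - d)) / c))"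
  using assms
proof (induction d arbitrary: h)
  case 0
  show ?case
  proof (cases "gr I J (h K) > c")
    case True
    have "emeasure M (cyl K h \<inter> Ev K) \<le> emeasure M (cyl K h)"
      by (rule emeasure_mono) (use cyl_sets[of K h] in auto)
    also have "\<dots> = ennreal (pic K h)" by (rule emeas_cyl) simp
    finally show ?thesis using min1[OF True] by simp
  next
    case False
    have "cyl K h \<inter> Ev K = {}"
      using gr_on_cyl[of _ K h K] False unfolding Ev_def by fastforce
    then show ?thesis by simp
  qed
next
  case (Suc d)
  define j where "j = K - Suc d"
  have jK: "j < K" and sj: "Suc j = K - d" using Suc.prems unfolding j_def by auto
  have IH: "emeasure M (cyl (Suc j) h' \<inter> Ev (Suc j)) \<le> ennreal (pic (Suc j) h') * ennreal (min 1 (gr I J (h' (Suc j)) / c))"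
    for h' using Suc.IH[of h'] Suc.prems sj by simp
  have "emeasure M (cyl j h \<inter> Ev j) \<le> ennreal (pic j h) * ennreal (min 1 (gr I J (h j) / c))"
  proof (cases "gr I J (h j) > c")
    case True
    have "emeasure M (cyl j h \<inter> Ev j) \<le> emeasure M (cyl j h)"
      by (rule emeasure_mono) (use cyl_sets[of j h] jK in auto)
    also have "\<dots> = ennreal (pic j h)" by (rule emeas_cyl) (use jK in simp)
    finally show ?thesis using min1[OF True] by simp
  next
    case False
    define T where "T v = cyl (Suc j) (h(Suc j := v)) \<inter> Ev (Suc j)" for v
    define \<Delta> where "\<Delta> = ts (Suc j) - ts j"
    have D: "\<Delta> \<ge> 0" unfolding \<Delta>_def using tsinc[OF jK] by simp
    have disj: "disjoint_family_on T (PiE I (\<lambda>_. UNIV::nat set))"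
      unfolding disjoint_family_on_def
    proof (intro ballI impI)
      fix v v' :: "'v \<Rightarrow> nat" assume v: "v \<in> PiE I (\<lambda>_. UNIV)" "v' \<in> PiE I (\<lambda>_. UNIV)" "v \<noteq> v'"
      then obtain i where i: "i \<in> I" "v i \<noteq> v' i" by (metis PiE_ext)
      show "T v \<inter> T v' = {}"
        using i unfolding T_def cyl_def by fastforce
    qed
    have "emeasure M (cyl j h \<inter> Ev j) = emeasure M (\<Union>v\<in>PiE I (\<lambda>_. UNIV). T v)"
      unfolding T_def using cyl_union[of j h, OF jK False] by simp
    also have "\<dots> = (\<integral>\<^sup>+v. emeasure M (T v) \<partial>count_space (PiE I (\<lambda>_. UNIV)))"
    proof (rule emeasure_UN_countable)
      fix v show "T v \<in> sets M" unfolding T_def using cyl_sets[of "Suc j"] Ev_sets jK by auto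
    qed (use countable_PiE[OF I(1), of "\<lambda>_. UNIV::nat set"] disj in auto)
    also have "\<dots> \<le> (\<integral>\<^sup>+v. ennreal (pic j h) * ennreal (1 / c) * ((\<Prod>i\<in>I. ep \<Delta> (h j i) (v i)) * ennreal (gr I J v))
         \<partial>count_space (PiE I (\<lambda>_. UNIV)))"
    proof (rule nn_integral_mono)
      fix v
      have "emeasure M (T v) \<le> ennreal (pic (Suc j) (h(Suc j := v))) * ennreal (min 1 (gr I J v / c))"
        unfolding T_def using IH[of "h(Suc j := v)"] by simp
      also have "\<dots> \<le> ennreal (pic (Suc j) (h(Suc j := v))) * ennreal (gr I J v / c)"
        by (intro mult_left_mono ennreal_leI) auto
      also have "\<dots> = ennreal (pic (Suc j) (h(Suc j := v)) * (gr I J v / c))"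
        by (rule ennreal_mult[symmetric]) (use pic_nonneg[of "Suc j" "h(Suc j := v)"] jK gr_nonneg[of I J v] c in \<open>auto intro: divide_nonneg_pos\<close>)
      also have "\<dots> = ennreal (pic j h * (\<Prod>i\<in>I. p \<Delta> (h j i) (v i)) * (gr I J v / c))"
        unfolding pic_Suc \<Delta>_def ..
      also have "\<dots> = ennreal (pic j h) * ennreal (1 / c) * ((\<Prod>i\<in>I. ep \<Delta> (h j i) (v i)) * ennreal (gr I J v))"
      proof -
        have A0: "pic j h \<ge> 0" using pic_nonneg[of j h] jK by simp
        have P0: "(\<Prod>i\<in>I. p \<Delta> (h j i) (v i)) \<ge> 0" by (intro prod_nonneg) (use nonneg[OF D] in auto)
        have g0: "gr I J v \<ge> 0" by (rule gr_nonneg)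
        have c0: "1 / c \<ge> 0" using c by simp
        have "pic j h * (\<Prod>i\<in>I. p \<Delta> (h j i) (v i)) * (gr I J v / c)
            = pic j h * (1 / c) * ((\<Prod>i\<in>I. p \<Delta> (h j i) (v i)) * gr I J v)" by simp
        also have "ennreal \<dots> = ennreal (pic j h) * ennreal (1 / c) * (ennreal (\<Prod>i\<in>I. p \<Delta> (h j i) (v i)) * ennreal (gr I J v))"
          by (simp only: ennreal_mult[OF mult_nonneg_nonneg[OF A0 c0] mult_nonneg_nonneg[OF P0 g0]]
             ennreal_mult[OF A0 c0] ennreal_mult[OF P0 g0])
        also have "ennreal (\<Prod>i\<in>I. p \<Delta> (h j i) (v i)) = (\<Prod>i\<in>I. ep \<Delta> (h j i) (v i))"
          by (rule prod_ennreal[symmetric]) (use nonneg[OF D] in auto)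
        finally show ?thesis .
      qed
      finally show "emeasure M (T v) \<le> ennreal (pic j h) * ennreal (1 / c) * ((\<Prod>i\<in>I. ep \<Delta> (h j i) (v i)) * ennreal (gr I J v))" .
    qed
    also have "\<dots> = ennreal (pic j h) * ennreal (1 / c) *
        (\<integral>\<^sup>+v. (\<Prod>i\<in>I. ep \<Delta> (h j i) (v i)) * ennreal (gr I J v) \<partial>count_space (PiE I (\<lambda>_. UNIV)))"
      by (rule nn_cmult_count)
    also have "\<dots> \<le> ennreal (pic j h) * ennreal (1 / c) * ennreal (gr I J (h j))"
      by (intro mult_left_mono crux[OF I(1) J D]) auto
    also have "\<dots> = ennreal (pic j h) * ennreal (min 1 (gr I J (h j) / c))"
    proof -
      have m: "min 1 (gr I J (h j) / c) = gr I J (h j) / c" using False c by (simp add: min_def)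
      have "ennreal (1 / c) * ennreal (gr I J (h j)) = ennreal (1 / c * gr I J (h j))"
        by (rule ennreal_mult[symmetric]) (use c gr_nonneg in auto)
      then show ?thesis unfolding m by (simp add: mult.assoc)
    qed
    finally show ?thesis .
  qed
  then show ?case unfolding j_def .
qed

lemma grid_max: "emeasure M (Ev 0) \<le> ennreal (min 1 (gr I J (\<lambda>_. 1) / c))"
proof -
  define h1 where "h1 = (\<lambda>(l::nat) (i::'v). 1::nat)"
  have c0: "cyl 0 h1 \<in> sets M" by (rule cyl_sets) simp
  have "emeasure M (cyl 0 h1) = 1" unfolding emeas_cyl[of 0, simplified] pic_def h1_def by simp
  then have compl: "emeasure M (space M - cyl 0 h1) = 0"
    using emeasure_compl[OF c0] prob_space.emeasure_space_1[OF prob] by simp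
  have "Ev 0 \<subseteq> (cyl 0 h1 \<inter> Ev 0) \<union> (space M - cyl 0 h1)" unfolding Ev_def by auto
  then have "emeasure M (Ev 0) \<le> emeasure M ((cyl 0 h1 \<inter> Ev 0) \<union> (space M - cyl 0 h1))"
    by (intro emeasure_mono) (use c0 Ev_sets in auto)
  also have "\<dots> \<le> emeasure M (cyl 0 h1 \<inter> Ev 0) + emeasure M (space M - cyl 0 h1)"
    by (rule emeasure_subadditive) (use c0 Ev_sets in auto)
  also have "\<dots> = emeasure M (cyl (K - K) h1 \<inter> Ev (K - K))" using compl by simp
  also have "\<dots> \<le> ennreal (pic (K - K) h1) * ennreal (min 1 (gr I J (h1 (K - K)) / c))"
    by (rule Ev_bound) simp
  also have "\<dots> = ennreal (min 1 (gr I J (\<lambda>_. 1) / c))" unfolding pic_def h1_def by simp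
  finally show ?thesis .
qed

end


context fam begin

lemma finite_times_bound:
  assumes I: "finite I" "I \<subseteq> V" and J: "J \<subseteq> I" and c: "c > 0"
    and Ts: "finite Ts" "0 \<in> Ts" "Ts \<subseteq> {0..}"
  shows "{\<omega>\<in>space M. \<exists>t\<in>Ts. gr I J (\<lambda>i. N i t \<omega>) > c} \<in> sets M"
    "emeasure M {\<omega>\<in>space M. \<exists>t\<in>Ts. gr I J (\<lambda>i. N i t \<omega>) > c} \<le> ennreal (gr I J (\<lambda>_. 1) / c)"
proof -
  define L where "L = sorted_list_of_set Ts"
  define K where "K = length L - 1"
  define ts where "ts l = L ! l" for l
  have setL: "set L = Ts" unfolding L_def using Ts by simp
  have sw: "sorted_wrt (<) L" unfolding L_def by (rule strict_sorted_list_of_set)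
  have lenL: "length L = Suc K" unfolding K_def using setL Ts(2) by (cases L) auto
  have inc: "ts l < ts (Suc l)" if "l < K" for l
    unfolding ts_def using sorted_wrt_nth_less[OF sw, of l "Suc l"] lenL that by simp
  have ts0: "ts 0 = 0"
  proof -
    obtain k where k: "k < length L" "L ! k = 0" using Ts(2) setL by (metis in_set_conv_nth)
    have "L ! 0 \<le> L ! k"
    proof (cases "k = 0")
      case False then show ?thesis using sorted_wrt_nth_less[OF sw, of 0 k] k by simp
    qed simp
    moreover have "L ! 0 \<ge> 0" using Ts(3) setL lenL by (metis atLeast_iff nth_mem subsetD zero_less_Suc)
    ultimately show ?thesis unfolding ts_def using k by simp
  qed
  interpret grid r q p M V N I J ts K c
    by unfold_locales (use I J ts0 inc c in auto)
  have eq: "{\<omega>\<in>space M. \<exists>t\<in>Ts. gr I J (\<lambda>i. N i t \<omega>) > c} = Ev 0"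
  proof -
    have "Ts = ts ` {0..K}" unfolding ts_def using setL lenL
      by (auto simp: set_conv_nth less_Suc_eq_le)
    then show ?thesis unfolding Ev_def by auto
  qed
  show "{\<omega>\<in>space M. \<exists>t\<in>Ts. gr I J (\<lambda>i. N i t \<omega>) > c} \<in> sets M" unfolding eq by (rule Ev_sets)
  have "emeasure M (Ev 0) \<le> ennreal (min 1 (gr I J (\<lambda>_. 1) / c))" by (rule grid_max)
  also have "\<dots> \<le> ennreal (gr I J (\<lambda>_. 1) / c)" by (intro ennreal_leI) simp
  finally show "emeasure M {\<omega>\<in>space M. \<exists>t\<in>Ts. gr I J (\<lambda>i. N i t \<omega>) > c} \<le> ennreal (gr I J (\<lambda>_. 1) / c)"
    unfolding eq .
qed

end


lemma bd_ratio_gr: "bd_ratio N I J t \<omega> = gr I J (\<lambda>i. N i t \<omega>)"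
  unfolding bd_ratio_def gr_def by simp

context fam begin

lemma rat_bound:
  assumes I: "finite I" "I \<subseteq> V" and J: "J \<subseteq> I" and c: "c > 0"
  shows "{\<omega>\<in>space M. \<exists>t\<in>{r. r \<in> \<rat> \<and> 0 \<le> r}. gr I J (\<lambda>i. N i t \<omega>) > c} \<in> sets M"
    "emeasure M {\<omega>\<in>space M. \<exists>t\<in>{r. r \<in> \<rat> \<and> 0 \<le> r}. gr I J (\<lambda>i. N i t \<omega>) > c} \<le> ennreal (gr I J (\<lambda>_. 1) / c)"
proof -
  define Qp where "Qp = {r::real. r \<in> \<rat> \<and> 0 \<le> r}"
  have cQ: "countable Qp" unfolding Qp_def by (rule countable_subset[OF _ countable_rat]) auto
  have nQ: "Qp \<noteq> {}" unfolding Qp_def by auto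
  define Fn where "Fn n = insert 0 (from_nat_into Qp ` {..<n})" for n
  define Bn where "Bn n = {\<omega>\<in>space M. \<exists>t\<in>Fn n. gr I J (\<lambda>i. N i t \<omega>) > c}" for n
  have FnQ: "Fn n \<subseteq> {0..}" for n unfolding Fn_def using from_nat_into[OF nQ] unfolding Qp_def by auto
  have Bn: "Bn n \<in> sets M" "emeasure M (Bn n) \<le> ennreal (gr I J (\<lambda>_. 1) / c)" for n
    unfolding Bn_def using finite_times_bound[OF I J c, of "Fn n"] FnQ unfolding Fn_def by auto
  have Fmono: "Fn m \<subseteq> Fn n" if "m \<le> n" for m n
    unfolding Fn_def using that by auto
  have inc: "incseq Bn"
    unfolding incseq_def
  proof (intro allI impI)
    fix m n :: nat assume "m \<le> n"
    then show "Bn m \<subseteq> Bn n" unfolding Bn_def using Fmono[of m n] by blast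
  qed
  have eqB: "{\<omega>\<in>space M. \<exists>t\<in>Qp. gr I J (\<lambda>i. N i t \<omega>) > c} = (\<Union>n. Bn n)"
  proof safe
    fix \<omega> t assume \<omega>: "\<omega> \<in> space M" and t: "t \<in> Qp" "gr I J (\<lambda>i. N i t \<omega>) > c"
    obtain k where "from_nat_into Qp k = t" using from_nat_into_surj[OF cQ t(1)] by blast
    then have "t \<in> Fn (Suc k)" unfolding Fn_def by auto
    then show "\<omega> \<in> (\<Union>n. Bn n)" unfolding Bn_def using \<omega> t by auto
  next
    fix \<omega> n assume "\<omega> \<in> Bn n"
    then obtain t where "\<omega> \<in> space M" "t \<in> Fn n" "gr I J (\<lambda>i. N i t \<omega>) > c" unfolding Bn_def by auto
    moreover have "t \<in> Qp"
      using \<open>t \<in> Fn n\<close> from_nat_into[OF nQ] unfolding Fn_def Qp_def by auto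
    ultimately show "\<omega> \<in> space M" "\<exists>t\<in>Qp. gr I J (\<lambda>i. N i t \<omega>) > c" by auto
  qed
  show "{\<omega>\<in>space M. \<exists>t\<in>{r. r \<in> \<rat> \<and> 0 \<le> r}. gr I J (\<lambda>i. N i t \<omega>) > c} \<in> sets M"
    using eqB Bn(1) unfolding Qp_def by auto
  have "emeasure M (\<Union>n. Bn n) = (SUP n. emeasure M (Bn n))"
    by (rule SUP_emeasure_incseq[symmetric]) (use Bn(1) inc in auto)
  also have "\<dots> \<le> ennreal (gr I J (\<lambda>_. 1) / c)" by (rule SUP_least) (rule Bn(2))
  finally show "emeasure M {\<omega>\<in>space M. \<exists>t\<in>{r. r \<in> \<rat> \<and> 0 \<le> r}. gr I J (\<lambda>i. N i t \<omega>) > c} \<le> ennreal (gr I J (\<lambda>_. 1) / c)"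
    using eqB unfolding Qp_def by simp
qed

lemma sup_subset:
  assumes I: "finite I" "I \<subseteq> V" "I \<noteq> {}" and J: "J \<subseteq> I" and cx: "c < x"
    and rc: "\<And>i \<omega> t. i \<in> V \<Longrightarrow> \<omega> \<in> space M \<Longrightarrow> t \<ge> 0 \<Longrightarrow>
                  \<exists>\<epsilon>>0. \<forall>s. t \<le> s \<and> s < t + \<epsilon> \<longrightarrow> N i s \<omega> = N i t \<omega>"
  shows "{\<omega>\<in>space M. (SUP t\<in>{0..}. bd_ratio N I J t \<omega>) \<ge> x}
     \<subseteq> {\<omega>\<in>space M. \<exists>t\<in>{r. r \<in> \<rat> \<and> 0 \<le> r}. gr I J (\<lambda>i. N i t \<omega>) > c}"
proof safe
  fix \<omega> assume \<omega>: "\<omega> \<in> space M" and sx: "(SUP t\<in>{0..}. bd_ratio N I J t \<omega>) \<ge> x"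
  have bdd: "bdd_above ((\<lambda>t. bd_ratio N I J t \<omega>) ` {0..})"
  proof (rule bdd_aboveI2)
    fix t :: real
    define a where "a = (\<Sum>i\<in>J. N i t \<omega>)"
    define b where "b = (\<Sum>i\<in>I. N i t \<omega>)"
    have ab: "real a \<le> real b"
      using sum_mono2[OF I(1) J, of "\<lambda>i. N i t \<omega>"] unfolding a_def b_def by (simp only: of_nat_le_iff)
    have "(if b > 0 then real a / real b else 0) \<le> 1"
      using ab by (auto simp: divide_le_eq_1)
    then show "bd_ratio N I J t \<omega> \<le> 1" unfolding bd_ratio_def a_def b_def .
  qed
  have "c < (SUP t\<in>{0..}. bd_ratio N I J t \<omega>)" using sx cx by linarith
  then obtain t where t: "t \<ge> 0" "bd_ratio N I J t \<omega> > c"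
    using less_cSUP_iff[OF _ bdd] by auto
  have "\<forall>i\<in>I. \<exists>\<epsilon>. \<epsilon> > 0 \<and> (\<forall>s. t \<le> s \<and> s < t + \<epsilon> \<longrightarrow> N i s \<omega> = N i t \<omega>)"
    using rc I(2) \<omega> t(1) by blast
  from bchoice[OF this] obtain e where e0: "\<forall>i\<in>I. e i > 0 \<and> (\<forall>s. t \<le> s \<and> s < t + e i \<longrightarrow> N i s \<omega> = N i t \<omega>)"
    by blast
  then have e: "\<And>i. i \<in> I \<Longrightarrow> e i > 0 \<and> (\<forall>s. t \<le> s \<and> s < t + e i \<longrightarrow> N i s \<omega> = N i t \<omega>)"
    by blast
  define \<epsilon> where "\<epsilon> = Min (e ` I)"
  have \<epsilon>: "\<epsilon> > 0" unfolding \<epsilon>_def using e I by auto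
  obtain s where s: "s \<in> \<rat>" "t < s" "s < t + \<epsilon>" using Rats_dense_in_real[of t "t + \<epsilon>"] \<epsilon> by auto
  have "N i s \<omega> = N i t \<omega>" if "i \<in> I" for i
  proof -
    have "\<epsilon> \<le> e i" unfolding \<epsilon>_def using I that by auto
    then have "t \<le> s \<and> s < t + e i" using s by simp
    then show ?thesis using e[OF that] by blast
  qed
  then have "gr I J (\<lambda>i. N i s \<omega>) = gr I J (\<lambda>i. N i t \<omega>)" by (intro gr_cong[OF J]) auto
  then show "\<exists>t\<in>{r. r \<in> \<rat> \<and> 0 \<le> r}. gr I J (\<lambda>i. N i t \<omega>) > c"
    using t s unfolding bd_ratio_gr by (intro bexI[of _ s]) auto
qed

end


context fam begin

lemma sup_measure_bound:
  assumes I: "finite I" "I \<subseteq> V" "I \<noteq> {}" and J: "J \<subseteq> I" and x: "x > 0"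
    and rc: "\<And>i \<omega> t. i \<in> V \<Longrightarrow> \<omega> \<in> space M \<Longrightarrow> t \<ge> 0 \<Longrightarrow>
                  \<exists>\<epsilon>>0. \<forall>s. t \<le> s \<and> s < t + \<epsilon> \<longrightarrow> N i s \<omega> = N i t \<omega>"
  shows "measure M {\<omega>\<in>space M. (SUP t\<in>{0..}. bd_ratio N I J t \<omega>) \<ge> x} \<le> gr I J (\<lambda>_. 1) / x"
proof -
  interpret prob_space M by (rule prob)
  define A where "A = {\<omega>\<in>space M. (SUP t\<in>{0..}. bd_ratio N I J t \<omega>) \<ge> x}"
  define g where "g = gr I J (\<lambda>_. 1)"
  have g0: "g \<ge> 0" unfolding g_def by (rule gr_nonneg)
  have gx0: "g / x \<ge> 0" using g0 x by simp
  have "measure M A \<le> g / x"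
  proof (cases "A \<in> sets M")
    case False then show ?thesis using gx0 by (simp add: measure_notin_sets)
  next
    case True
    have mc: "measure M A \<le> g / c" if c: "0 < c" "c < x" for c
    proof -
      define B where "B = {\<omega>\<in>space M. \<exists>t\<in>{r. r \<in> \<rat> \<and> 0 \<le> r}. gr I J (\<lambda>i. N i t \<omega>) > c}"
      have B: "B \<in> sets M" "emeasure M B \<le> ennreal (g / c)"
        unfolding B_def g_def using rat_bound[OF I(1,2) J c(1)] by auto
      have "A \<subseteq> B" unfolding A_def B_def by (rule sup_subset[OF I J c(2) rc])
      then have "measure M A \<le> measure M B" by (intro finite_measure_mono B(1))
      also have "measure M B \<le> g / c"
        using B(2) emeasure_eq_measure[of B] g0 c by (simp add: ennreal_le_iff divide_nonneg_pos)
      finally show ?thesis .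
    qed
    show "measure M A \<le> g / x"
    proof (cases "measure M A > 0")
      case False then show ?thesis using gx0 by simp
    next
      case True
      have "x \<le> g / measure M A"
      proof (rule dense_le_bounded[OF x])
        fix w assume "0 < w" "w < x"
        then have "measure M A \<le> g / w" by (rule mc)
        then show "w \<le> g / measure M A" using True \<open>0 < w\<close> by (simp add: field_simps)
      qed
      then show ?thesis using True x by (simp add: field_simps)
    qed
  qed
  then show ?thesis unfolding A_def g_def .
qed

end

theorem mainTheorem16:
  fixes M :: "'w measure" and V :: "'v set" and N :: "'v \<Rightarrow> real \<Rightarrow> 'w \<Rightarrow> nat"
    and r q :: real and p :: "real \<Rightarrow> nat \<Rightarrow> nat \<Rightarrow> real"
  assumes "prob_space M"
    and "countable V"
    and "0 \<le> q" and "q < r"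
    and "is_bd_transition r q p"
    and meas: "\<And>i t. i \<in> V \<Longrightarrow> t \<ge> 0 \<Longrightarrow> N i t \<in> measurable M (count_space UNIV)"
    and rcont: "\<And>i \<omega> t. i \<in> V \<Longrightarrow> \<omega> \<in> space M \<Longrightarrow> t \<ge> 0 \<Longrightarrow>
                  \<exists>\<epsilon>>0. \<forall>s. t \<le> s \<and> s < t + \<epsilon> \<longrightarrow> N i s \<omega> = N i t \<omega>"
    and "iid_bd_family M V N p"
  shows "\<exists>\<delta>>0. \<exists>G :: real \<Rightarrow> real.
           (\<forall>y\<ge>0. G y \<ge> 0) \<and>
           (\<forall>x y. 0 \<le> x \<longrightarrow> x \<le> y \<longrightarrow> G y \<le> G x) \<and>
           (G \<longlongrightarrow> 0) at_top \<and>
           (\<forall>I J x. finite I \<longrightarrow> I \<subseteq> V \<longrightarrow> J \<subseteq> I \<longrightarrow> J \<noteq> {} \<longrightarrow> x \<ge> 0 \<longrightarrow>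
              measure M {\<omega>\<in>space M. (SUP t\<in>{0..}. bd_ratio N I J t \<omega>) \<ge> x}
                \<le> G (real (card I) / real (card J) * x) + exp (- 2 * \<delta> * real (card I)))"
proof -
  interpret fam r q p M V N
    by (rule fam.intro[OF bdp.intro[OF assms(3,4,5)] fam_axioms.intro[OF assms(1) meas assms(8)]])
  interpret prob_space M by (rule assms(1))
  define G where "G y = (if y \<le> 1 then 1 else 1 / y)" for y :: real
  have G1: "\<forall>y\<ge>0. G y \<ge> 0" unfolding G_def by auto
  have G2: "\<forall>x y. 0 \<le> x \<longrightarrow> x \<le> y \<longrightarrow> G y \<le> G x"
    unfolding G_def by (auto simp: frac_le divide_le_eq_1)
  have G3: "(G \<longlongrightarrow> 0) at_top"
  proof -
    have "((\<lambda>y::real. 1 / y) \<longlongrightarrow> 0) at_top"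
      by (intro tendsto_divide_0[OF tendsto_const] filterlim_at_top_imp_at_infinity filterlim_ident)
    moreover have "eventually (\<lambda>y. 1 / y = G y) at_top"
      unfolding G_def using eventually_gt_at_top[of 1] by eventually_elim auto
    ultimately show ?thesis by (rule Lim_transform_eventually)
  qed
  have G4: "measure M {\<omega>\<in>space M. (SUP t\<in>{0..}. bd_ratio N I J t \<omega>) \<ge> x}
                \<le> G (real (card I) / real (card J) * x) + exp (- 2 * 1 * real (card I))"
    if I: "finite I" "I \<subseteq> V" and J: "J \<subseteq> I" "J \<noteq> {}" and x: "x \<ge> 0" for I J x
  proof -
    define m where "m = measure M {\<omega>\<in>space M. (SUP t\<in>{0..}. bd_ratio N I J t \<omega>) \<ge> x}"
    define y where "y = real (card I) / real (card J) * x"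
    have Ine: "I \<noteq> {}" using J by auto
    have cI: "card I > 0" using I Ine by (simp add: card_gt_0_iff)
    have cJ: "card J > 0" using I J by (metis card_gt_0_iff finite_subset)
    have m1: "m \<le> 1" unfolding m_def by (rule prob_le_1)
    have "m \<le> G y"
    proof (cases "y \<le> 1")
      case True then show ?thesis using m1 unfolding G_def by simp
    next
      case False
      then have xpos: "x > 0" using x unfolding y_def by (cases "x = 0") auto
      have "m \<le> gr I J (\<lambda>_. 1) / x"
        unfolding m_def by (rule sup_measure_bound[OF I Ine J(1) xpos rcont])
      also have "gr I J (\<lambda>_. 1) = real (card J) / real (card I)"
        unfolding gr_def using cI by simp
      also have "real (card J) / real (card I) / x = 1 / y"
        unfolding y_def using cI cJ xpos by (simp add: field_simps)
      finally show ?thesis using False unfolding G_def by simp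
    qed
    moreover have "exp (- 2 * 1 * real (card I)) \<ge> 0" by simp
    ultimately show ?thesis unfolding m_def y_def by linarith
  qed
  show ?thesis
    by (rule exI[of _ 1], simp only: zero_less_one simp_thms, rule exI[of _ G])
       (use G1 G2 G3 G4 in auto)
qed


end
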